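(* Assume (K1) and (K2). For every $x\in\mathbb R^d$ at which $\lambda_i(x)\ne\lambda_j(x)$ for all $i\in\{r+1,\dots,d\}$, $j\in\{1,\dots,r\}$, $$\lambda_{\min}(\Sigma(x))\ \ge\ \frac{\lambda_{\min}(\mathbf R)}{2\,\lambda_{\max}(D^+(D^+)^T)}\ \min_{i\in\{r+1,\dots,d\}}\ \sum_{j=1}^r\Big[\frac{v_j(x)^T\nabla f(x)}{\lambda_i(x)-\lambda_j(x)}\Big]^2,$$ and $\lambda_{\min}(\mathbf R)>0$.
   Context: Let $d\ge2$, $1\le r\le d-1$. $f$ is a twice differentiable probability density on $\mathbb R^d$; $\lambda_1(x)\ge\dots\ge\lambda_d(x)$ are eigenvalues of $\nabla^2f(x)$ with orthonormal eigenvectors $v_1(x),\dots,v_d(x)$. For symmetric $d\times d$ $A$, $\mathrm{vech}(A)\in\mathbb R^{d(d+1)/2}$ stacks the lower-triangular part (with diagonal), $\mathrm{vec}(A)\in\mathbb R^{d^2}$ stacks the columns, and $D$ is the $d^2\times d(d+1)/2$ duplication matrix with $\mathrm{vec}(A)=D\,\mathrm{vech}(A)$; $D^+$ is its Moore–Penrose pseudoinverse. $d^2K=\mathrm{vech}(\nabla^2K)$, $\mathbf R=\int_{\mathbb R^d}d^2K(u)d^2K(u)^Tdu$. $\otimes$ is the Kronecker product. For $i=r+1,\dots,d$, $m_i(x)=D^T\big(v_i(x)\otimes\sum_{j=1}^r\frac{v_j(x)^T\nabla f(x)}{\lambda_i(x)-\lambda_j(x)}v_j(x)\big)$, $M(x)=(m_{r+1}(x),\dots,m_d(x))$,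 $\Sigma(x)=M(x)^T\mathbf RM(x)$. $\lambda_{\min},\lambda_{\max}$ denote smallest/largest eigenvalues of a symmetric matrix. (K1) $K$ is a spherically symmetric probability density supported on the closed unit ball with continuous partial derivatives up to order 4. (K2) For every open ball $S$ of positive radius in the unit ball, the components of $\mathbf 1_S\,d^2K$ are linearly independent. *)

theory Defs
  imports "HOL-Analysis.Analysis" "Jordan_Normal_Form.Char_Poly"
begin

section \<open>Coordinates of R^d (d = CARD('n)) as indices 0..d-1\<close>

definition coord :: "nat \<Rightarrow> 'n::finite" where
  "coord = (SOME e. bij_betw e {..<CARD('n)} (UNIV :: 'n set))"

definition to_jvec :: "real^'n::finite \<Rightarrow> real Matrix.vec" where
  "to_jvec y = Matrix.vec CARD('n) (\<lambda>k. vec_nth y (coord k))"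

definition to_jmat :: "real^'n::finite^'n \<Rightarrow> real mat" where
  "to_jmat A = Matrix.mat CARD('n) CARD('n) (\<lambda>(i,j). vec_nth (vec_nth A (coord i)) (coord j))"

text \<open>Lower-triangular index pairs (row, column), stacked column by column.\<close>
definition vech_pairs :: "nat \<Rightarrow> (nat \<times> nat) list" where
  "vech_pairs d = concat (map (\<lambda>j. map (\<lambda>i. (i, j)) [j..<d]) [0..<d])"

definition vech_mat :: "real mat \<Rightarrow> real Matrix.vec" where
  "vech_mat A = Matrix.vec (length (vech_pairs (dim_row A))) (\<lambda>k. A $$ (vech_pairs (dim_row A) ! k))"

definition vec_mat :: "real mat \<Rightarrow> real Matrix.vec" where
  "vec_mat A = Matrix.vec (dim_row A * dim_col A) (\<lambda>k. A $$ (k mod dim_row A, k div dim_row A))"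

definition dup_mat :: "nat \<Rightarrow> real mat" where
  "dup_mat d = (THE D. D \<in> carrier_mat (d * d) (d * (d + 1) div 2) \<and>
      (\<forall>A \<in> carrier_mat d d. transpose_mat A = A \<longrightarrow> vec_mat A = D *\<^sub>v vech_mat A))"

definition pinv :: "real mat \<Rightarrow> real mat" where
  "pinv A = (THE X. X \<in> carrier_mat (dim_col A) (dim_row A) \<and> A * X * A = A \<and> X * A * X = X \<and>
      transpose_mat (A * X) = A * X \<and> transpose_mat (X * A) = X * A)"

definition kron_vec :: "real Matrix.vec \<Rightarrow> real Matrix.vec \<Rightarrow> real Matrix.vec" where
  "kron_vec a b = Matrix.vec (dim_vec a * dim_vec b) (\<lambda>k. vec_index a (k div dim_vec b) * vec_index b (k mod dim_vec b))"

definition lam_min :: "real mat \<Rightarrow> real" where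
  "lam_min A = Min {k. eigenvalue A k}"

definition lam_max :: "real mat \<Rightarrow> real" where
  "lam_max A = Max {k. eigenvalue A k}"

definition has_partial :: "'n \<Rightarrow> (real^'n::finite \<Rightarrow> real) \<Rightarrow> real^'n \<Rightarrow> bool" where
  "has_partial i g y = ((\<lambda>t. g (y + t *\<^sub>R axis i 1)) differentiable (at 0))"

definition partial_deriv :: "'n \<Rightarrow> (real^'n::finite \<Rightarrow> real) \<Rightarrow> real^'n \<Rightarrow> real" where
  "partial_deriv i g y = deriv (\<lambda>t. g (y + t *\<^sub>R axis i 1)) 0"

fun Ck :: "nat \<Rightarrow> (real^'n::finite \<Rightarrow> real) \<Rightarrow> bool" where
  "Ck 0 g = continuous_on UNIV g"
| "Ck (Suc k) g = (continuous_on UNIV g \<and> (\<forall>i y. has_partial i g y) \<and> (\<forall>i. Ck k (partial_deriv i g)))"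

definition hessK :: "(real^'n::finite \<Rightarrow> real) \<Rightarrow> real^'n \<Rightarrow> real^'n^'n" where
  "hessK K u = (\<chi> i j. partial_deriv i (partial_deriv j K) u)"

definition d2K :: "(real^'n::finite \<Rightarrow> real) \<Rightarrow> real^'n \<Rightarrow> real Matrix.vec" where
  "d2K K u = vech_mat (to_jmat (hessK K u))"

definition R_mat :: "(real^'n::finite \<Rightarrow> real) \<Rightarrow> real mat" where
  "R_mat K = Matrix.mat (CARD('n) * (CARD('n) + 1) div 2) (CARD('n) * (CARD('n) + 1) div 2)
     (\<lambda>(k, l). \<integral>u. vec_index (d2K K u) k * vec_index (d2K K u) l \<partial>lborel)"

text \<open>Eigenvalues lam 1..d and eigenvectors v 1..d (indices 1..d as in the paper), gradient gx.\<close>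
definition m_vec :: "nat \<Rightarrow> (nat \<Rightarrow> real) \<Rightarrow> (nat \<Rightarrow> real^'n::finite) \<Rightarrow> real^'n \<Rightarrow> nat \<Rightarrow> real Matrix.vec" where
  "m_vec r lam v gx i = transpose_mat (dup_mat CARD('n)) *\<^sub>v
     kron_vec (to_jvec (v i)) (to_jvec (\<Sum>j\<in>{1..r}. ((v j \<bullet> gx) / (lam i - lam j)) *\<^sub>R v j))"

definition M_mat :: "nat \<Rightarrow> (nat \<Rightarrow> real) \<Rightarrow> (nat \<Rightarrow> real^'n::finite) \<Rightarrow> real^'n \<Rightarrow> real mat" where
  "M_mat r lam v gx = Matrix.mat (CARD('n) * (CARD('n) + 1) div 2) (CARD('n) - r)
     (\<lambda>(k, l). vec_index (m_vec r lam v gx (r + 1 + l)) k)"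

definition Sigma_mat :: "(real^'n::finite \<Rightarrow> real) \<Rightarrow> nat \<Rightarrow> (nat \<Rightarrow> real) \<Rightarrow> (nat \<Rightarrow> real^'n) \<Rightarrow> real^'n \<Rightarrow> real mat" where
  "Sigma_mat K r lam v gx = transpose_mat (M_mat r lam v gx) * R_mat K * M_mat r lam v gx"

end

theory Submission
  imports Defs
begin


lemma mm_entry: "A \<in> carrier_mat n m \<Longrightarrow> B \<in> carrier_mat m l \<Longrightarrow> i < n \<Longrightarrow> j < l \<Longrightarrow>
   (A * B) $$ (i,j) = (\<Sum>k<m. A $$ (i,k) * B $$ (k,j))"
  by (auto simp: scalar_prod_def lessThan_atLeast0 intro!: sum.cong)

lemma mv_entry: "A \<in> carrier_mat n m \<Longrightarrow> x \<in> carrier_vec m \<Longrightarrow> i < n \<Longrightarrow>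
   vec_index (A *\<^sub>v x) i = (\<Sum>k<m. A $$ (i,k) * vec_index x k)"
  by (auto simp: scalar_prod_def lessThan_atLeast0 intro!: sum.cong)

lemma sp_sum: "x \<in> carrier_vec m \<Longrightarrow> y \<in> carrier_vec m \<Longrightarrow> scalar_prod x y = (\<Sum>k<m. vec_index x k * vec_index y k)"
  by (auto simp: scalar_prod_def lessThan_atLeast0)

definition L_set :: "nat \<Rightarrow> (nat \<times> nat) set" where
  "L_set d = {(i,j). j \<le> i \<and> i < d}"

lemma vp_set: "set (vech_pairs d) = L_set d"
  by (auto simp: vech_pairs_def L_set_def image_iff intro!: bexI)

lemma vp_distinct: "distinct (vech_pairs d)"
  unfolding vech_pairs_def
proof (rule distinct_concat)
  show "distinct (map (\<lambda>j. map (\<lambda>i. (i, j)) [j..<d]) [0..<d])"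
  proof (subst distinct_map, intro conjI)
    show "inj_on (\<lambda>j. map (\<lambda>i. (i, j)) [j..<d]) (set [0..<d])"
    proof (rule inj_onI)
      fix x y assume "x \<in> set [0..<d]" "y \<in> set [0..<d]" and eq: "map (\<lambda>i. (i, x)) [x..<d] = map (\<lambda>i. (i, y)) [y..<d]"
      then have "(x,x) \<in> set (map (\<lambda>i. (i, y)) [y..<d])" by (metis atLeastLessThan_iff eq imageI le_refl set_map set_upt)
      then show "x = y" by auto
    qed
  qed simp
qed (auto simp: distinct_map inj_on_def)

lemma L_set_Suc: "L_set (Suc d) = L_set d \<union> (\<lambda>j. (d,j)) ` {..d}"
  by (auto simp: L_set_def)

lemma card_L: "card (L_set d) = d * (d+1) div 2"
proof (induction d)
  case 0 then show ?case by (simp add: L_set_def)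
next
  case (Suc d)
  have fin: "finite (L_set d)" by (rule finite_subset[of _ "{..<d} \<times> {..<d}"]) (auto simp: L_set_def)
  have "card (L_set (Suc d)) = card (L_set d) + card ((\<lambda>j. (d,j)) ` {..d})"
    unfolding L_set_Suc by (rule card_Un_disjoint) (use fin in \<open>auto simp: L_set_def\<close>)
  also have "card ((\<lambda>j. (d,j)) ` {..d}) = Suc d" by (subst card_image) (auto simp: inj_on_def)
  finally show ?case using Suc by simp
qed

lemma vp_len: "length (vech_pairs d) = d * (d+1) div 2"
  using distinct_card[OF vp_distinct, of d] card_L[of d] vp_set[of d] by simp

lemma vp_bij: "bij_betw ((!) (vech_pairs d)) {..<d * (d+1) div 2} (L_set d)"
  by (rule bij_betw_nth) (auto simp: vp_distinct vp_len vp_set)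

lemma vp_in: "p < d * (d+1) div 2 \<Longrightarrow> vech_pairs d ! p \<in> L_set d"
  using vp_bij[of d] by (auto simp: bij_betw_def)

lemma vp_inj: "p < d * (d+1) div 2 \<Longrightarrow> q < d * (d+1) div 2 \<Longrightarrow> vech_pairs d ! p = vech_pairs d ! q \<longleftrightarrow> p = q"
  using vp_distinct[of d] vp_len[of d] by (simp add: nth_eq_iff_index_eq)

lemma sum_vp: "(\<Sum>p<d * (d+1) div 2. F (vech_pairs d ! p)) = (\<Sum>x\<in>L_set d. F x)"
  using sum.reindex_bij_betw[OF vp_bij[of d], of F] by simp

lemma vp0: "0 < d \<Longrightarrow> vech_pairs d ! 0 = (0,0)"
  by (simp add: vech_pairs_def upt_conv_Cons)

lemma sum_sq: "(\<Sum>k<(d::nat)*d. H (k mod d) (k div d)) = (\<Sum>a<d. \<Sum>b<d. H a b)"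
proof -
  have bij: "bij_betw (\<lambda>k. (k mod d, k div d)) {..<d*d} ({..<d} \<times> {..<d})"
  proof (rule bij_betw_byWitness[where f' = "\<lambda>(a::nat,b::nat). a + d*b"])
    show "\<forall>a\<in>{..<d*d}. (case (a mod d, a div d) of (a, b) \<Rightarrow> a + d * b) = a" by simp
    show "\<forall>a'\<in>{..<d} \<times> {..<d}. (\<lambda>k. (k mod d, k div d)) ((case a' of (a, b) \<Rightarrow> a + d * b)) = a'"
      by auto
    show "(\<lambda>k. (k mod d, k div d)) ` {..<d * d} \<subseteq> {..<d} \<times> {..<d}"
      by (auto simp: less_mult_imp_div_less) (metis mod_less_divisor mult_0_right not_less_zero not_gr_zero)
    show "(\<lambda>(a, b). a + d * b) ` ({..<d} \<times> {..<d}) \<subseteq> {..<d * d}"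
    proof (clarsimp)
      fix a b assume "a < d" "b < d"
      then have "a + d*b < d + d*b" by simp
      also have "\<dots> = d * (Suc b)" by simp
      also have "\<dots> \<le> d * d" using \<open>b<d\<close> by (intro mult_le_mono2) simp
      finally show "a + d*b < d*d" .
    qed
  qed
  have "(\<Sum>k<d*d. H (k mod d) (k div d)) = (\<Sum>x\<in>{..<d} \<times> {..<d}. H (fst x) (snd x))"
    using sum.reindex_bij_betw[OF bij, of "\<lambda>x. H (fst x) (snd x)"] by simp
  also have "\<dots> = (\<Sum>a<d. \<Sum>b<d. H a b)" by (simp add: sum.cartesian_product split_beta)
  finally show ?thesis .
qed

definition srt :: "nat \<Rightarrow> nat \<Rightarrow> nat \<times> nat" where
  "srt a b = (max a b, min a b)"

lemma srt_L: "a < d \<Longrightarrow> b < d \<Longrightarrow> srt a b \<in> L_set d"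
  by (auto simp: srt_def L_set_def)

lemma srt_comm: "srt a b = srt b a"
  by (auto simp: srt_def)

lemma srt_L_id: "x \<in> L_set d \<Longrightarrow> srt (fst x) (snd x) = x"
  by (auto simp: srt_def L_set_def max_def min_def)

definition Dm :: "nat \<Rightarrow> real mat" where
  "Dm d = Matrix.mat (d*d) (d*(d+1) div 2) (\<lambda>(k,p). if srt (k mod d) (k div d) = vech_pairs d ! p then 1 else 0)"

lemma Dm_carrier: "Dm d \<in> carrier_mat (d*d) (d*(d+1) div 2)"
  by (simp add: Dm_def)

lemma Dm_entry: "k < d*d \<Longrightarrow> p < d*(d+1) div 2 \<Longrightarrow> Dm d $$ (k,p) = (if srt (k mod d) (k div d) = vech_pairs d ! p then 1 else 0)"
  by (simp add: Dm_def)

lemma finite_L: "finite (L_set d)"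
  by (rule finite_subset[of _ "{..<d} \<times> {..<d}"]) (auto simp: L_set_def)

lemma sum_delta_vp: "a < d \<Longrightarrow> b < d \<Longrightarrow>
  (\<Sum>p<d*(d+1) div 2. if srt a b = vech_pairs d ! p then F (vech_pairs d ! p) else 0) = F (srt a b)"
proof -
  assume ab: "a < d" "b < d"
  have "(\<Sum>p<d*(d+1) div 2. if srt a b = vech_pairs d ! p then F (vech_pairs d ! p) else 0)
      = (\<Sum>x\<in>L_set d. if srt a b = x then F x else 0)"
    by (rule sum_vp)
  also have "\<dots> = F (srt a b)"
    using srt_L[OF ab] by (simp add: sum.delta' finite_L)
  finally show ?thesis .
qed


lemma pair_sum: assumes "j \<le> i" "i < d"
  shows "(\<Sum>a<d. \<Sum>b<d. if srt a b = (i,j) then G a b else 0) = (if i = j then G i i else G i j + G j i)"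
proof -
  have inner: "(\<Sum>b<d. if srt a b = (i,j) then G a b else 0) =
     (if a = i then G i j else 0) + (if a = j \<and> i \<noteq> j then G j i else 0)" if "a < d" for a
  proof -
    have "(\<Sum>b<d. if srt a b = (i,j) then G a b else 0) =
      (\<Sum>b<d. (if b = j then (if a = i then G a b else 0) else 0) + (if b = i then (if a = j \<and> i \<noteq> j then G a b else 0) else 0))"
      using assms by (intro sum.cong) (auto simp: srt_def max_def min_def)
    also have "\<dots> = (if a = i then G i j else 0) + (if a = j \<and> i \<noteq> j then G j i else 0)"
      using assms by (simp add: sum.distrib sum.delta)
    finally show ?thesis .
  qed
  have "(\<Sum>a<d. \<Sum>b<d. if srt a b = (i,j) then G a b else 0) =
     (\<Sum>a<d. (if a = i then G i j else 0) + (if a = j \<and> i \<noteq> j then G j i else 0))"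
    by (intro sum.cong) (simp_all add: inner)
  also have "\<dots> = (if i = j then G i i else G i j + G j i)"
    using assms by (simp add: sum.distrib sum.delta)
  finally show ?thesis .
qed

lemma Dm_vech: assumes A: "A \<in> carrier_mat d d" and sym: "transpose_mat A = A"
  shows "vec_mat A = Dm d *\<^sub>v vech_mat A"
proof (rule eq_vecI)
  have dA: "dim_row A = d" "dim_col A = d" using A by auto
  show "dim_vec (vec_mat A) = dim_vec (Dm d *\<^sub>v vech_mat A)"
    by (simp add: vec_mat_def dA Dm_def)
  fix k assume "k < dim_vec (Dm d *\<^sub>v vech_mat A)"
  then have k: "k < d*d" by (simp add: Dm_def)
  then have dpos: "0 < d" by (cases d) auto
  have km: "k mod d < d" "k div d < d" using k dpos by (auto simp: less_mult_imp_div_less)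
  have vc: "vech_mat A \<in> carrier_vec (d*(d+1) div 2)" by (simp add: vech_mat_def dA vp_len)
  have "vec_index (Dm d *\<^sub>v vech_mat A) k = (\<Sum>p<d*(d+1) div 2. Dm d $$ (k,p) * vec_index (vech_mat A) p)"
    by (rule mv_entry[OF Dm_carrier vc k])
  also have "\<dots> = (\<Sum>p<d*(d+1) div 2. if srt (k mod d) (k div d) = vech_pairs d ! p then A $$ (vech_pairs d ! p) else 0)"
    by (intro sum.cong) (auto simp: Dm_entry k vech_mat_def dA vp_len)
  also have "\<dots> = A $$ (srt (k mod d) (k div d))" by (rule sum_delta_vp[OF km])
  also have "\<dots> = A $$ (k mod d, k div d)"
  proof -
    have "A $$ (k div d, k mod d) = A $$ (k mod d, k div d)"
      using arg_cong[OF sym, of "\<lambda>B. B $$ (k mod d, k div d)"] km dA by simp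
    then show ?thesis by (auto simp: srt_def max_def min_def)
  qed
  finally show "vec_index (vec_mat A) k = vec_index (Dm d *\<^sub>v vech_mat A) k"
    by (simp add: vec_mat_def dA k)
qed

lemma Dm_unique: assumes D: "D \<in> carrier_mat (d*d) (d*(d+1) div 2)"
  and H: "\<forall>A \<in> carrier_mat d d. transpose_mat A = A \<longrightarrow> vec_mat A = D *\<^sub>v vech_mat A"
  shows "D = Dm d"
proof (rule eq_matI)
  show "dim_row D = dim_row (Dm d)" "dim_col D = dim_col (Dm d)" using D by (auto simp: Dm_def)
  fix k p assume "k < dim_row (Dm d)" "p < dim_col (Dm d)"
  then have k: "k < d*d" and p: "p < d*(d+1) div 2" by (auto simp: Dm_def)
  define A where "A = Matrix.mat d d (\<lambda>(a,b). if srt a b = vech_pairs d ! p then 1 else (0::real))"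
  have Ac: "A \<in> carrier_mat d d" by (simp add: A_def)
  have As: "transpose_mat A = A" by (rule eq_matI) (auto simp: A_def srt_comm)
  have vh: "vech_mat A = unit_vec (d*(d+1) div 2) p"
  proof (rule eq_vecI)
    show "dim_vec (vech_mat A) = dim_vec (unit_vec (d * (d + 1) div 2) p)" by (simp add: vech_mat_def A_def vp_len)
    fix q assume "q < dim_vec (unit_vec (d * (d + 1) div 2) p)"
    then have q: "q < d*(d+1) div 2" by simp
    have inL: "vech_pairs d ! q \<in> L_set d" by (rule vp_in[OF q])
    then have lt: "fst (vech_pairs d ! q) < d" "snd (vech_pairs d ! q) < d" by (auto simp: L_set_def)
    have "vec_index (vech_mat A) q = (if srt (fst (vech_pairs d ! q)) (snd (vech_pairs d ! q)) = vech_pairs d ! p then 1 else 0)"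
      using lt q by (cases "vech_pairs d ! q") (simp add: vech_mat_def A_def vp_len)
    also have "\<dots> = (if q = p then 1 else 0)" using srt_L_id[OF inL] vp_inj[OF q p] by simp
    finally show "vec_index (vech_mat A) q = vec_index (unit_vec (d * (d + 1) div 2) p) q" using q by (simp add: unit_vec_def)
  qed
  have "vec_mat A = D *\<^sub>v unit_vec (d*(d+1) div 2) p" using H Ac As vh by auto
  then have "vec_index (vec_mat A) k = vec_index (D *\<^sub>v unit_vec (d*(d+1) div 2) p) k" by simp
  also have "\<dots> = D $$ (k,p)" using D k p by (simp add: scalar_prod_right_unit)
  finally have "D $$ (k,p) = vec_index (vec_mat A) k" by simp
  also have "\<dots> = Dm d $$ (k,p)"
  proof -
    have dpos: "0 < d" using k by (cases d) auto
    have km: "k mod d < d" "k div d < d" using k dpos by (auto simp: less_mult_imp_div_less)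
    show ?thesis using k km p by (simp add: vec_mat_def A_def Dm_entry)
  qed
  finally show "D $$ (k,p) = Dm d $$ (k,p)" .
qed

lemma dup_mat_eq: "dup_mat d = Dm d"
  unfolding dup_mat_def
proof (rule the_equality)
  show "Dm d \<in> carrier_mat (d * d) (d * (d + 1) div 2) \<and>
    (\<forall>A\<in>carrier_mat d d. A\<^sup>T = A \<longrightarrow> vec_mat A = Dm d *\<^sub>v vech_mat A)"
    using Dm_carrier Dm_vech by blast
qed (use Dm_unique in blast)




lemma mp_unique:
  fixes A X Y :: "real mat"
  assumes A: "A \<in> carrier_mat m n" and X: "X \<in> carrier_mat n m" and Y: "Y \<in> carrier_mat n m"
  and x1: "A * X * A = A" and x2: "X * A * X = X" and x3: "transpose_mat (A * X) = A * X" and x4: "transpose_mat (X * A) = X * A"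
  and y1: "A * Y * A = A" and y2: "Y * A * Y = Y" and y3: "transpose_mat (A * Y) = A * Y" and y4: "transpose_mat (Y * A) = Y * A"
  shows "X = Y"
proof -
  have AX: "A * X \<in> carrier_mat m m" and AY: "A * Y \<in> carrier_mat m m" and XA: "X * A \<in> carrier_mat n n"
    and YA: "Y * A \<in> carrier_mat n n" using A X Y by auto
  have At: "transpose_mat A \<in> carrier_mat n m" and Xt: "transpose_mat X \<in> carrier_mat m n" using A X by auto
  have l2: "transpose_mat A = transpose_mat A * (A * Y)"
  proof -
    have "transpose_mat A = transpose_mat (A * Y * A)" using y1 by simp
    also have "\<dots> = transpose_mat A * transpose_mat (A * Y)" by (rule transpose_mult[OF AY A])
    finally show ?thesis using y3 by simp
  qed
  have eq1: "A * X = A * Y"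
  proof -
    have "A * X = transpose_mat (A * X)" using x3 by simp
    also have "\<dots> = transpose_mat X * transpose_mat A" by (rule transpose_mult[OF A X])
    also have "\<dots> = transpose_mat X * (transpose_mat A * (A * Y))" using l2 by simp
    also have "\<dots> = (transpose_mat X * transpose_mat A) * (A * Y)" by (rule assoc_mult_mat[symmetric, OF Xt At AY])
    also have "transpose_mat X * transpose_mat A = A * X" using transpose_mult[OF A X] x3 by simp
    also have "A * X * (A * Y) = A * X * A * Y" by (rule assoc_mult_mat[symmetric, OF AX A Y])
    also have "\<dots> = A * Y" using x1 by simp
    finally show ?thesis .
  qed
  have l3: "transpose_mat A = (Y * A) * transpose_mat A"
  proof -
    have "transpose_mat A = transpose_mat (A * (Y * A))" using y1 assoc_mult_mat[OF A Y A] by simp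
    also have "\<dots> = transpose_mat (Y * A) * transpose_mat A" by (rule transpose_mult[OF A YA])
    finally show ?thesis using y4 by simp
  qed
  have eq2: "X * A = Y * A"
  proof -
    have "X * A = transpose_mat (X * A)" using x4 by simp
    also have "\<dots> = transpose_mat A * transpose_mat X" by (rule transpose_mult[OF X A])
    also have "\<dots> = ((Y * A) * transpose_mat A) * transpose_mat X" using l3 by simp
    also have "\<dots> = (Y * A) * (transpose_mat A * transpose_mat X)" by (rule assoc_mult_mat[OF YA At Xt])
    also have "transpose_mat A * transpose_mat X = X * A" using transpose_mult[OF X A] x4 by simp
    also have "Y * A * (X * A) = Y * (A * (X * A))" by (rule assoc_mult_mat[OF Y A XA])
    also have "A * (X * A) = A * X * A" by (rule assoc_mult_mat[symmetric, OF A X A])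
    also have "\<dots> = A" by (rule x1)
    finally show ?thesis .
  qed
  have "X = X * A * X" using x2 by simp
  also have "\<dots> = X * (A * X)" by (rule assoc_mult_mat[OF X A X])
  also have "\<dots> = X * (A * Y)" using eq1 by simp
  also have "\<dots> = X * A * Y" by (rule assoc_mult_mat[symmetric, OF X A Y])
  also have "\<dots> = Y * A * Y" using eq2 by simp
  also have "\<dots> = Y" by (rule y2)
  finally show ?thesis .
qed




definition cc :: "nat \<Rightarrow> nat \<Rightarrow> real" where
  "cc d p = (if fst (vech_pairs d ! p) = snd (vech_pairs d ! p) then 1 else 2)"

lemma cc_pos: "cc d p > 0" by (simp add: cc_def)

definition Xm :: "nat \<Rightarrow> real mat" where
  "Xm d = Matrix.mat (d*(d+1) div 2) (d*d) (\<lambda>(p,k). Dm d $$ (k,p) / cc d p)"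

lemma Xm_carrier: "Xm d \<in> carrier_mat (d*(d+1) div 2) (d*d)" by (simp add: Xm_def)

lemma kmod: assumes k: "k < (d::nat)*d" shows "k mod d < d \<and> k div d < d"
proof -
  have "0 < d" using k by (cases d) auto
  then show ?thesis using k by (auto simp: less_mult_imp_div_less)
qed

lemma Xm_entry: "p < d*(d+1) div 2 \<Longrightarrow> k < d*d \<Longrightarrow> Xm d $$ (p,k) = Dm d $$ (k,p) / cc d p"
  by (simp add: Xm_def)

lemma Xmt_entry: "p < d*(d+1) div 2 \<Longrightarrow> k < d*d \<Longrightarrow> transpose_mat (Xm d) $$ (k,p) = Dm d $$ (k,p) / cc d p"
  by (simp add: Xm_def)

lemma N_pos: "0 < d \<Longrightarrow> 0 < d*(d+1) div (2::nat)"
proof -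
  assume "0 < d"
  then have "2 \<le> d*(d+1)" by (cases d) auto
  then show ?thesis by simp
qed

lemma DtD: assumes p: "p < d*(d+1) div 2" and q: "q < d*(d+1) div 2"
  shows "(\<Sum>k<d*d. Dm d $$ (k,p) * Dm d $$ (k,q)) = (if p = q then cc d p else 0)"
proof -
  have "(\<Sum>k<d*d. Dm d $$ (k,p) * Dm d $$ (k,q)) =
     (\<Sum>k<d*d. (\<lambda>a b. if srt a b = vech_pairs d ! p then (if srt a b = vech_pairs d ! q then 1 else 0) else 0) (k mod d) (k div d))"
    by (intro sum.cong) (auto simp: Dm_entry[OF _ p] Dm_entry[OF _ q])
  also have "\<dots> = (\<Sum>a<d. \<Sum>b<d. if srt a b = vech_pairs d ! p then (if srt a b = vech_pairs d ! q then 1 else 0) else 0)"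
    by (rule sum_sq)
  also have "\<dots> = (if p = q then cc d p else 0)"
  proof (cases "p = q")
    case True
    obtain i j where ij: "vech_pairs d ! q = (i,j)" by (cases "vech_pairs d ! q")
    then have L: "j \<le> i" "i < d" using vp_in[OF q] by (auto simp: L_set_def)
    have "(\<Sum>a<d. \<Sum>b<d. if srt a b = (i,j) then (if srt a b = (i,j) then 1 else 0) else (0::real))
       = (\<Sum>a<d. \<Sum>b<d. if srt a b = (i,j) then 1 else 0)" by (simp cong: if_cong)
    then show ?thesis unfolding True ij using pair_sum[OF L, of "\<lambda>a b. 1"] ij by (cases "i = j") (auto simp: cc_def)
  next
    case False
    then have "vech_pairs d ! p \<noteq> vech_pairs d ! q" using vp_inj[OF p q] by simp
    then show ?thesis using False by (auto intro!: sum.neutral)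
  qed
  finally show ?thesis .
qed

lemma XD: "Xm d * Dm d = 1\<^sub>m (d*(d+1) div 2)"
proof (rule eq_matI)
  fix p q assume "p < dim_row (1\<^sub>m (d*(d+1) div 2))" "q < dim_col (1\<^sub>m (d*(d+1) div 2))"
  then have p: "p < d*(d+1) div 2" and q: "q < d*(d+1) div 2" by auto
  have "(Xm d * Dm d) $$ (p,q) = (\<Sum>k<d*d. Xm d $$ (p,k) * Dm d $$ (k,q))"
    by (rule mm_entry[OF Xm_carrier Dm_carrier p q])
  also have "\<dots> = (\<Sum>k<d*d. Dm d $$ (k,p) * Dm d $$ (k,q)) / cc d p"
    by (simp add: Xm_entry[OF p] sum_divide_distrib)
  also have "\<dots> = 1\<^sub>m (d*(d+1) div 2) $$ (p,q)" using DtD[OF p q] p q cc_pos[of d p] cc_pos[of d q] by simp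
  finally show "(Xm d * Dm d) $$ (p,q) = 1\<^sub>m (d*(d+1) div 2) $$ (p,q)" .
qed (auto simp: Xm_def Dm_def)

lemma DX_sym: "transpose_mat (Dm d * Xm d) = Dm d * Xm d"
proof (rule eq_matI)
  fix k l assume "k < dim_row (Dm d * Xm d)" "l < dim_col (Dm d * Xm d)"
  then have k: "k < d*d" and l: "l < d*d" by (auto simp: Dm_def Xm_def)
  have "transpose_mat (Dm d * Xm d) $$ (k,l) = (Dm d * Xm d) $$ (l,k)" using k l by (simp add: Dm_def Xm_def)
  also have "\<dots> = (\<Sum>p<d*(d+1) div 2. Dm d $$ (l,p) * Xm d $$ (p,k))" by (rule mm_entry[OF Dm_carrier Xm_carrier l k])
  also have "\<dots> = (\<Sum>p<d*(d+1) div 2. Dm d $$ (k,p) * Xm d $$ (p,l))"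
    by (intro sum.cong) (auto simp: Xm_def k l)
  also have "\<dots> = (Dm d * Xm d) $$ (k,l)" by (rule mm_entry[symmetric, OF Dm_carrier Xm_carrier k l])
  finally show "transpose_mat (Dm d * Xm d) $$ (k,l) = (Dm d * Xm d) $$ (k,l)" .
qed (auto simp: Dm_def Xm_def)

lemma pinv_Dm: "pinv (Dm d) = Xm d"
proof -
  let ?N = "d*(d+1) div 2"
  have dims: "dim_col (Dm d) = ?N" "dim_row (Dm d) = d*d" by (auto simp: Dm_def)
  have c1: "Dm d * Xm d * Dm d = Dm d"
    using assoc_mult_mat[OF Dm_carrier Xm_carrier Dm_carrier] XD right_mult_one_mat[OF Dm_carrier] by simp
  have c2: "Xm d * Dm d * Xm d = Xm d"
    using XD left_mult_one_mat[OF Xm_carrier] by simp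
  have c4: "transpose_mat (Xm d * Dm d) = Xm d * Dm d" using XD by simp
  have P: "Xm d \<in> carrier_mat (dim_col (Dm d)) (dim_row (Dm d)) \<and> Dm d * Xm d * Dm d = Dm d \<and> Xm d * Dm d * Xm d = Xm d \<and>
      transpose_mat (Dm d * Xm d) = Dm d * Xm d \<and> transpose_mat (Xm d * Dm d) = Xm d * Dm d"
    using Xm_carrier c1 c2 DX_sym c4 dims by simp
  show ?thesis unfolding pinv_def
    apply (rule the_equality)
     apply (rule P)
    apply (rule mp_unique[OF Dm_carrier _ Xm_carrier])
    using P dims by auto
qed

lemma eig_finite: assumes "(A :: real mat) \<in> carrier_mat n n" shows "finite {k. eigenvalue A k}"
proof -
  have "char_poly A \<noteq> 0" using degree_monic_char_poly[OF assms] by auto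
  then show ?thesis using poly_roots_finite[of "char_poly A"] eigenvalue_root_char_poly[OF assms] by simp
qed

lemma P_entry: assumes p: "p < d*(d+1) div 2" and q: "q < d*(d+1) div 2"
  shows "(Xm d * transpose_mat (Xm d)) $$ (p,q) = (if p = q then 1 / cc d p else 0)"
proof -
  have Xt: "transpose_mat (Xm d) \<in> carrier_mat (d*d) (d*(d+1) div 2)" using Xm_carrier by simp
  have "(Xm d * transpose_mat (Xm d)) $$ (p,q) = (\<Sum>k<d*d. Xm d $$ (p,k) * transpose_mat (Xm d) $$ (k,q))"
    by (rule mm_entry[OF Xm_carrier Xt p q])
  also have "\<dots> = (\<Sum>k<d*d. Dm d $$ (k,p) * Dm d $$ (k,q)) / (cc d p * cc d q)"
    by (simp add: Xm_entry[OF p] Xmt_entry[OF q] sum_divide_distrib)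
  also have "\<dots> = (if p = q then 1 / cc d p else 0)" using DtD[OF p q] cc_pos[of d p] by (simp add: power2_eq_square)
  finally show ?thesis .
qed

lemma lam_max_P: assumes d: "0 < d"
  shows "1 \<le> lam_max (pinv (dup_mat d) * transpose_mat (pinv (dup_mat d)))"
proof -
  let ?N = "d*(d+1) div 2"
  let ?P = "Xm d * transpose_mat (Xm d)"
  have N: "0 < ?N" using N_pos[OF d] .
  have Xt: "transpose_mat (Xm d) \<in> carrier_mat (d*d) ?N" using Xm_carrier[of d] by (simp only: transpose_carrier_mat)
  have Pc: "?P \<in> carrier_mat ?N ?N" by (rule mult_carrier_mat[OF Xm_carrier Xt])
  have cc0: "cc d 0 = 1" using vp0[OF d] by (simp add: cc_def)
  have ev: "eigenvector ?P (unit_vec ?N 0) 1"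
    unfolding eigenvector_def
  proof (intro conjI)
    show "unit_vec ?N 0 \<in> carrier_vec (dim_row ?P)" by (simp add: Xm_def)
    show "unit_vec ?N 0 \<noteq> 0\<^sub>v (dim_row ?P)"
      using N by (auto simp: Xm_def vec_eq_iff)
    show "?P *\<^sub>v unit_vec ?N 0 = 1 \<cdot>\<^sub>v unit_vec ?N 0"
    proof (rule eq_vecI)
      fix p assume "p < dim_vec (1 \<cdot>\<^sub>v unit_vec ?N 0)"
      then have p: "p < ?N" by simp
      have "vec_index (?P *\<^sub>v unit_vec ?N 0) p = (\<Sum>k<?N. ?P $$ (p,k) * vec_index (unit_vec ?N 0) k)"
        by (rule mv_entry[OF Pc _ p]) simp
      also have "\<dots> = (\<Sum>k<?N. if k = 0 then ?P $$ (p,k) else 0)"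
        by (rule sum.cong) (auto simp: unit_vec_def)
      also have "\<dots> = ?P $$ (p,0)" using N by simp
      also have "\<dots> = vec_index (1 \<cdot>\<^sub>v unit_vec ?N 0) p" using P_entry[OF p N] cc0 p by (simp add: unit_vec_def)
      finally show "vec_index (?P *\<^sub>v unit_vec ?N 0) p = vec_index (1 \<cdot>\<^sub>v unit_vec ?N 0) p" .
    qed (simp add: Xm_def)
  qed
  then have "eigenvalue ?P 1" unfolding eigenvalue_def by blast
  moreover have "finite {k. eigenvalue ?P k}" by (rule eig_finite[OF Pc])
  ultimately have "1 \<le> lam_max ?P" unfolding lam_max_def by (simp add: Max_ge)
  then show ?thesis by (simp add: dup_mat_eq pinv_Dm)
qed




lemma quad_zero: fixes a b :: real assumes H: "\<forall>t. 0 \<le> a * t + b * t^2" shows "a = 0"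
proof (rule ccontr)
  assume a: "a \<noteq> 0"
  define t where "t = - a / (\<bar>b\<bar> + 1)"
  have pos: "\<bar>b\<bar> + 1 > 0" by simp
  have "a * t = - (a^2) / (\<bar>b\<bar> + 1)" by (simp add: t_def power2_eq_square)
  moreover have "b * t^2 \<le> \<bar>b\<bar> * a^2 / (\<bar>b\<bar> + 1)^2"
    by (simp add: t_def power_divide) (metis abs_ge_self divide_right_mono mult_right_mono zero_le_power2 zero_le_square power2_eq_square)
  moreover have "\<bar>b\<bar> * a^2 / (\<bar>b\<bar> + 1)^2 < a^2 / (\<bar>b\<bar> + 1)"
  proof -
    have "a^2 > 0" using a by simp
    have "\<bar>b\<bar> * a^2 < (\<bar>b\<bar> + 1) * a^2" using \<open>a^2 > 0\<close> by simp
    then have "\<bar>b\<bar> * a^2 / (\<bar>b\<bar> + 1)^2 < (\<bar>b\<bar> + 1) * a^2 / (\<bar>b\<bar> + 1)^2"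
      using pos by (intro divide_strict_right_mono) auto
    also have "\<dots> = a^2 / (\<bar>b\<bar> + 1)" using pos by (simp add: power2_eq_square)
    finally show ?thesis .
  qed
  ultimately have "a * t + b * t^2 < 0" by linarith
  with H show False by (meson not_less)
qed

lemma sum_sq_zero: fixes w :: "nat \<Rightarrow> real"
  assumes "(\<Sum>i<m. (w i)^2) = 0" "i < m" shows "w i = 0"
proof -
  have "\<forall>i\<in>{..<m}. (w i)^2 = 0" using assms(1) by (subst sum_nonneg_eq_0_iff[symmetric]) auto
  then show ?thesis using assms(2) by simp
qed

lemma rayleigh_fun:
  fixes A :: "real mat"
  assumes A: "A \<in> carrier_mat m m" and sym: "transpose_mat A = A" and m: "0 < m" and mT: "m \<le> CARD('a::finite)"
  shows "\<exists>\<mu> u. (\<forall>w. \<mu> * (\<Sum>i<m. (w i)^2) \<le> (\<Sum>i<m. \<Sum>j<m. w i * A $$ (i,j) * w j))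
               \<and> (\<Sum>i<m. (u i)^2) = 1 \<and> (\<forall>i<m. (\<Sum>j<m. A $$ (i,j) * u j) = \<mu> * u i)"
proof -
  obtain h :: "nat \<Rightarrow> 'a" where h: "bij_betw h {0..<CARD('a)} UNIV"
    using ex_bij_betw_nat_finite[of "UNIV :: 'a set"] by auto
  have inj: "inj_on h {..<m}"
    by (rule inj_on_subset[OF bij_betw_imp_inj_on[OF h]]) (use mT in auto)
  define E where "E = h ` {..<m}"
  define Q where "Q = (\<lambda>y :: real^'a. \<Sum>i<m. \<Sum>j<m. vec_nth y (h i) * A $$ (i,j) * vec_nth y (h j))"
  define S where "S = {y :: real^'a. norm y = 1 \<and> (\<forall>a. a \<notin> E \<longrightarrow> vec_nth y a = 0)}"
  have S_eq: "S = sphere 0 1 \<inter> (\<Inter>a\<in>-E. {y. vec_nth y a = 0})" by (auto simp: S_def)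
  have "closed S" unfolding S_eq
    by (intro closed_Int closed_sphere closed_INT ballI closed_Collect_eq continuous_intros)
  moreover have "bounded S" unfolding S_eq by (rule bounded_Int) auto
  ultimately have cS: "compact S" by (simp add: compact_eq_bounded_closed)
  have "norm (axis (h 0) (1::real)) = 1" by (rule norm_axis_1)
  moreover have "\<forall>a. a \<notin> E \<longrightarrow> vec_nth (axis (h 0) (1::real)) a = 0" using m by (auto simp: E_def axis_def)
  ultimately have "axis (h 0) 1 \<in> S" by (simp add: S_def)
  then have nS: "S \<noteq> {}" by auto
  have cQ: "continuous_on S Q" unfolding Q_def by (intro continuous_intros)
  obtain y0 where y0: "y0 \<in> S" and ymin: "\<And>y. y \<in> S \<Longrightarrow> Q y0 \<le> Q y"
    using continuous_attains_inf[OF cS nS cQ] by auto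
  define \<mu> where "\<mu> = Q y0"
  define u where "u = (\<lambda>i. vec_nth y0 (h i))"
  have sumE: "(\<Sum>a\<in>UNIV. (vec_nth y a)^2) = (\<Sum>i<m. (vec_nth y (h i))^2)" if "\<forall>a. a \<notin> E \<longrightarrow> vec_nth y a = 0" for y :: "real^'a"
  proof -
    have "(\<Sum>a\<in>UNIV. (vec_nth y a)^2) = (\<Sum>a\<in>E. (vec_nth y a)^2)"
      using that by (intro sum.mono_neutral_right) auto
    also have "\<dots> = (\<Sum>i<m. (vec_nth y (h i))^2)" unfolding E_def by (rule sum.reindex[OF inj, unfolded comp_def])
    finally show ?thesis .
  qed
  have nrm: "norm y = 1 \<longleftrightarrow> (\<Sum>a\<in>UNIV. (vec_nth y a)^2) = 1" for y :: "real^'a"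
    by (simp add: norm_eq_1 inner_vec_def power2_eq_square)
  have u1: "(\<Sum>i<m. (u i)^2) = 1" using y0 sumE nrm unfolding S_def u_def by auto
  have Qu: "Q y0 = (\<Sum>i<m. \<Sum>j<m. u i * A $$ (i,j) * u j)" by (simp add: Q_def u_def)
  have ray: "\<mu> * (\<Sum>i<m. (w i)^2) \<le> (\<Sum>i<m. \<Sum>j<m. w i * A $$ (i,j) * w j)" for w
  proof (cases "(\<Sum>i<m. (w i)^2) = 0")
    case True
    then have "\<And>i. i < m \<Longrightarrow> w i = 0" using sum_sq_zero by blast
    then show ?thesis using True by simp
  next
    case False
    define s where "s = (\<Sum>i<m. (w i)^2)"
    have s: "s > 0" using False unfolding s_def by (metis (no_types, lifting) sum_nonneg zero_le_power2 less_eq_real_def)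
    define y where "y = (\<chi> a. if a \<in> E then w (inv_into {..<m} h a) / sqrt s else (0::real))"
    have yh: "vec_nth y (h i) = w i / sqrt s" if "i < m" for i
      using that inj by (simp add: y_def E_def inv_into_f_f)
    have ysup: "\<forall>a. a \<notin> E \<longrightarrow> vec_nth y a = 0" by (simp add: y_def)
    have "(\<Sum>a\<in>UNIV. (vec_nth y a)^2) = (\<Sum>i<m. (w i / sqrt s)^2)" using sumE[OF ysup] yh by simp
    also have "\<dots> = (\<Sum>i<m. (w i)^2) / s" using s by (simp add: power_divide sum_divide_distrib)
    also have "\<dots> = 1" using s by (simp add: s_def)
    finally have "y \<in> S" using nrm ysup by (simp add: S_def)
    then have "\<mu> \<le> Q y" using ymin \<mu>_def by simp
    also have "Q y = (\<Sum>i<m. \<Sum>j<m. w i * A $$ (i,j) * w j) / s"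
    proof -
      have "Q y = (\<Sum>i<m. \<Sum>j<m. (w i * A $$ (i,j) * w j) / s)"
        unfolding Q_def using s by (intro sum.cong refl) (simp add: yh)
      then show ?thesis by (simp add: sum_divide_distrib)
    qed
    finally show ?thesis using s unfolding s_def by (simp add: pos_le_divide_eq mult.commute)
  qed
  have symA: "A $$ (i,j) = A $$ (j,i)" if "i < m" "j < m" for i j
    using arg_cong[OF sym, of "\<lambda>B. B $$ (i,j)"] that A by auto
  define g where "g = (\<lambda>i. (\<Sum>j<m. A $$ (i,j) * u j) - \<mu> * u i)"
  have orth: "(\<Sum>i<m. z i * g i) = 0" for z
  proof -
    let ?a = "2 * (\<Sum>i<m. z i * g i)"
    let ?b = "(\<Sum>i<m. \<Sum>j<m. z i * A $$ (i,j) * z j) - \<mu> * (\<Sum>i<m. (z i)^2)"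
    have "0 \<le> ?a * t + ?b * t^2" for t
    proof -
      let ?w = "\<lambda>i. u i + t * z i"
      have r: "\<mu> * (\<Sum>i<m. (?w i)^2) \<le> (\<Sum>i<m. \<Sum>j<m. ?w i * A $$ (i,j) * ?w j)" by (rule ray)
      have e1: "(\<Sum>i<m. (?w i)^2) = 1 + 2 * t * (\<Sum>i<m. u i * z i) + t^2 * (\<Sum>i<m. (z i)^2)"
        using u1 by (simp add: power2_eq_square algebra_simps sum.distrib sum_distrib_left)
      have cross: "(\<Sum>i<m. \<Sum>j<m. z i * A $$ (i,j) * u j) = (\<Sum>i<m. \<Sum>j<m. u i * A $$ (i,j) * z j)"
      proof -
        have "(\<Sum>i<m. \<Sum>j<m. z i * A $$ (i,j) * u j) = (\<Sum>j<m. \<Sum>i<m. z i * A $$ (i,j) * u j)" by (rule sum.swap)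
        also have "\<dots> = (\<Sum>i<m. \<Sum>j<m. u i * A $$ (i,j) * z j)"
          by (intro sum.cong refl) (simp add: symA)
        finally show ?thesis .
      qed
      have e2: "(\<Sum>i<m. \<Sum>j<m. ?w i * A $$ (i,j) * ?w j) = (\<Sum>i<m. \<Sum>j<m. u i * A $$ (i,j) * u j)
          + 2 * t * (\<Sum>i<m. \<Sum>j<m. z i * A $$ (i,j) * u j) + t^2 * (\<Sum>i<m. \<Sum>j<m. z i * A $$ (i,j) * z j)"
      proof -
        have "(\<Sum>i<m. \<Sum>j<m. ?w i * A $$ (i,j) * ?w j) = (\<Sum>i<m. \<Sum>j<m. u i * A $$ (i,j) * u j)
          + t * (\<Sum>i<m. \<Sum>j<m. z i * A $$ (i,j) * u j) + t * (\<Sum>i<m. \<Sum>j<m. u i * A $$ (i,j) * z j) + t^2 * (\<Sum>i<m. \<Sum>j<m. z i * A $$ (i,j) * z j)"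
          by (simp add: power2_eq_square algebra_simps sum.distrib sum_distrib_left)
        then show ?thesis using cross by simp
      qed
      have e3: "(\<Sum>i<m. \<Sum>j<m. z i * A $$ (i,j) * u j) = (\<Sum>i<m. z i * g i) + \<mu> * (\<Sum>i<m. u i * z i)"
        by (simp add: g_def algebra_simps sum.distrib sum_distrib_left sum_subtractf)
      have "\<mu> = (\<Sum>i<m. \<Sum>j<m. u i * A $$ (i,j) * u j)" using Qu \<mu>_def by simp
      then show ?thesis using r e1 e2 e3 by (simp add: algebra_simps power2_eq_square)
    qed
    then have "?a = 0" by (intro quad_zero) auto
    then show ?thesis by simp
  qed
  have "(\<Sum>i<m. (g i)^2) = 0" using orth[of g] by (simp add: power2_eq_square)
  then have "\<forall>i<m. g i = 0" using sum_sq_zero by blast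
  then have "\<forall>i<m. (\<Sum>j<m. A $$ (i,j) * u j) = \<mu> * u i" by (simp add: g_def)
  then show ?thesis using ray u1 by blast
qed

lemma mv_entry': "A \<in> carrier_mat n m \<Longrightarrow> x \<in> carrier_vec m \<Longrightarrow> i < n \<Longrightarrow>
   vec_index (A *\<^sub>v x) i = (\<Sum>k<m. A $$ (i,k) * vec_index x k)"
  by (auto simp: scalar_prod_def lessThan_atLeast0 intro!: sum.cong)

lemma sp_sum': "x \<in> carrier_vec m \<Longrightarrow> y \<in> carrier_vec m \<Longrightarrow> scalar_prod x y = (\<Sum>k<m. vec_index x k * vec_index y k)"
  by (auto simp: scalar_prod_def lessThan_atLeast0)

lemma qf_sum: assumes A: "A \<in> carrier_mat m m" and x: "x \<in> carrier_vec m"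
  shows "scalar_prod x (A *\<^sub>v x) = (\<Sum>i<m. \<Sum>j<m. vec_index x i * A $$ (i,j) * vec_index x j)"
proof -
  have Ax: "A *\<^sub>v x \<in> carrier_vec m" using A x by auto
  show ?thesis unfolding sp_sum'[OF x Ax]
    by (intro sum.cong refl) (simp add: mv_entry'[OF A x] sum_distrib_left mult.assoc)
qed

lemma sq_sum: "(x :: real Matrix.vec) \<in> carrier_vec m \<Longrightarrow> scalar_prod x x = (\<Sum>i<m. (vec_index x i)^2)"
  by (simp add: sp_sum' power2_eq_square)

lemma sq_pos: assumes x: "(x :: real Matrix.vec) \<in> carrier_vec m" and nz: "x \<noteq> 0\<^sub>v m" shows "scalar_prod x x > 0"
proof -
  have "(\<Sum>i<m. (vec_index x i)^2) \<noteq> 0"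
  proof
    assume "(\<Sum>i<m. (vec_index x i)^2) = 0"
    then have "\<And>i. i < m \<Longrightarrow> vec_index x i = 0" using sum_sq_zero by blast
    then have "x = 0\<^sub>v m" using x by (intro eq_vecI) auto
    with nz show False by simp
  qed
  moreover have "(\<Sum>i<m. (vec_index x i)^2) \<ge> 0" by (intro sum_nonneg) auto
  ultimately show ?thesis using sq_sum[OF x] by simp
qed

lemma eig_finite': assumes "(A :: real mat) \<in> carrier_mat n n" shows "finite {k. eigenvalue A k}"
proof -
  have "char_poly A \<noteq> 0" using degree_monic_char_poly[OF assms] by auto
  then show ?thesis using poly_roots_finite[of "char_poly A"] eigenvalue_root_char_poly[OF assms] by simp
qed

lemma spectral:
  fixes A :: "real mat"
  assumes A: "A \<in> carrier_mat m m" and sym: "transpose_mat A = A" and m: "0 < m" and mT: "m \<le> CARD('a::finite)"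
  shows "finite {k. eigenvalue A k} \<and> eigenvalue A (lam_min A) \<and>
    (\<forall>x\<in>carrier_vec m. lam_min A * scalar_prod x x \<le> scalar_prod x (A *\<^sub>v x))"
proof -
  obtain \<mu> u where ray: "\<And>w. \<mu> * (\<Sum>i<m. (w i)^2) \<le> (\<Sum>i<m. \<Sum>j<m. w i * A $$ (i,j) * w j)"
    and u1: "(\<Sum>i<m. (u i)^2) = 1" and ev: "\<forall>i<m. (\<Sum>j<m. A $$ (i,j) * u j) = \<mu> * u i"
    using rayleigh_fun[OF A sym m mT] by blast
  have rayv: "\<mu> * scalar_prod x x \<le> scalar_prod x (A *\<^sub>v x)" if x: "x \<in> carrier_vec m" for x
    using ray[of "vec_index x"] by (simp add: qf_sum[OF A x] sq_sum[OF x])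
  define x0 where "x0 = Matrix.vec m u"
  have x0c: "x0 \<in> carrier_vec m" by (simp add: x0_def)
  have "x0 \<noteq> 0\<^sub>v m"
  proof
    assume "x0 = 0\<^sub>v m"
    then have "\<And>i. i < m \<Longrightarrow> u i = 0" by (metis index_vec index_zero_vec(1) x0_def)
    then have "(\<Sum>i<m. (u i)^2) = 0" by simp
    with u1 show False by simp
  qed
  moreover have "A *\<^sub>v x0 = \<mu> \<cdot>\<^sub>v x0"
  proof (rule eq_vecI)
    fix i assume "i < dim_vec (\<mu> \<cdot>\<^sub>v x0)"
    then have i: "i < m" by (simp add: x0_def)
    have "(\<Sum>k<m. A $$ (i,k) * vec_index x0 k) = (\<Sum>k<m. A $$ (i,k) * u k)" by (rule sum.cong) (auto simp: x0_def)
    then show "vec_index (A *\<^sub>v x0) i = vec_index (\<mu> \<cdot>\<^sub>v x0) i"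
      unfolding mv_entry'[OF A x0c i] using ev i by (simp add: x0_def)
  qed (use A in \<open>simp add: x0_def\<close>)
  ultimately have eig\<mu>: "eigenvalue A \<mu>" unfolding eigenvalue_def eigenvector_def using A x0c by auto
  have fin: "finite {k. eigenvalue A k}" by (rule eig_finite'[OF A])
  have ge: "\<mu> \<le> k" if ek: "eigenvalue A k" for k
  proof -
    obtain v where v: "v \<in> carrier_vec m" "v \<noteq> 0\<^sub>v m" "A *\<^sub>v v = k \<cdot>\<^sub>v v"
      using ek A unfolding eigenvalue_def eigenvector_def by auto
    have "scalar_prod v (A *\<^sub>v v) = k * scalar_prod v v" using v(1,3) by simp
    then have "\<mu> * scalar_prod v v \<le> k * scalar_prod v v" using rayv[OF v(1)] by simp
    then show ?thesis using sq_pos[OF v(1,2)] by simp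
  qed
  have "lam_min A = \<mu>" unfolding lam_min_def by (rule Min_eqI) (use fin ge eig\<mu> in auto)
  then show ?thesis using fin eig\<mu> rayv by simp
qed

lemma lam_min_ge:
  fixes A :: "real mat"
  assumes A: "A \<in> carrier_mat m m" and sym: "transpose_mat A = A" and m: "0 < m" and mT: "m \<le> CARD('a::finite)"
  and H: "\<forall>x\<in>carrier_vec m. c * scalar_prod x x \<le> scalar_prod x (A *\<^sub>v x)"
  shows "c \<le> lam_min A"
proof -
  have "eigenvalue A (lam_min A)" using spectral[OF A sym m mT] by blast
  then obtain v where v: "v \<in> carrier_vec m" "v \<noteq> 0\<^sub>v m" "A *\<^sub>v v = lam_min A \<cdot>\<^sub>v v"
    using A unfolding eigenvalue_def eigenvector_def by auto
  have "scalar_prod v (A *\<^sub>v v) = lam_min A * scalar_prod v v" using v(1,3) by simp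
  moreover have "c * scalar_prod v v \<le> scalar_prod v (A *\<^sub>v v)" using H v(1) by blast
  ultimately have "c * scalar_prod v v \<le> lam_min A * scalar_prod v v" by simp
  then show ?thesis using sq_pos[OF v(1,2)] by simp
qed




lemma partial_zero:
  fixes g :: "real^'n::finite \<Rightarrow> real"
  assumes U: "open U" and z: "\<forall>y\<in>U. g y = 0" and y: "y \<in> U"
  shows "partial_deriv i g y = 0"
proof -
  obtain e where e: "e > 0" "ball y e \<subseteq> U" using U y by (meson openE)
  have ev: "\<forall>\<^sub>F t in nhds 0. g (y + t *\<^sub>R axis i 1) = (\<lambda>_. 0::real) t"
  proof -
    have "\<forall>\<^sub>F t in nhds (0::real). t \<in> ball 0 e" using e(1) by (intro eventually_nhds_in_open) auto
    then show ?thesis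
    proof (rule eventually_mono)
      fix t :: real assume "t \<in> ball 0 e"
      then have "y + t *\<^sub>R axis i 1 \<in> ball y e" by (simp add: dist_norm)
      then show "g (y + t *\<^sub>R axis i 1) = (\<lambda>_. 0) t" using e z by auto
    qed
  qed
  have "((\<lambda>t. g (y + t *\<^sub>R axis i 1)) has_field_derivative 0) (at 0)"
    by (subst DERIV_cong_ev[OF refl ev refl]) simp
  then show ?thesis unfolding partial_deriv_def by (rule DERIV_imp_deriv)
qed

lemma hess_zero:
  fixes K :: "real^'n::finite \<Rightarrow> real"
  assumes K: "\<forall>u. 1 < norm u \<longrightarrow> K u = 0" and u: "1 < norm u"
  shows "partial_deriv i (partial_deriv j K) u = 0"
proof -
  let ?U = "{u :: real^'n. 1 < norm u}"
  have oU: "open ?U" by (intro open_Collect_less continuous_intros)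
  have "\<forall>y\<in>?U. partial_deriv j K y = 0" using partial_zero[OF oU] K by auto
  then show ?thesis using partial_zero[OF oU] u by auto
qed

lemma hess_cont:
  fixes K :: "real^'n::finite \<Rightarrow> real"
  assumes "Ck 4 K" shows "continuous_on UNIV (partial_deriv i (partial_deriv j K))"
proof -
  have e4: "(4::nat) = Suc (Suc (Suc (Suc 0)))" by simp
  have "Ck (Suc (Suc (Suc (Suc 0)))) K" using assms unfolding e4 .
  then show ?thesis by (simp only: Ck.simps)
qed

lemma int_cs:
  fixes G :: "real^'n::finite \<Rightarrow> real"
  assumes c: "continuous_on UNIV G" and z: "\<forall>u. 1 < norm u \<longrightarrow> G u = 0"
  shows "integrable lborel G"
proof -
  have "integrable lborel (\<lambda>x. indicator (cball 0 1) x *\<^sub>R G x)"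
    by (rule borel_integrable_compact) (auto intro: continuous_on_subset[OF c])
  moreover have "(\<lambda>x. indicator (cball 0 1) x *\<^sub>R G x) = G"
    using z by (auto simp: indicator_def fun_eq_iff not_le)
  ultimately show ?thesis by simp
qed

lemma int_pos:
  fixes G :: "real^'n::finite \<Rightarrow> real"
  assumes c: "continuous_on UNIV G" and i: "integrable lborel (\<lambda>u. (G u)^2)" and u0: "G u0 \<noteq> 0"
  shows "0 < (\<integral>u. (G u)^2 \<partial>lborel)"
proof -
  define c where "c = (G u0)^2 / 2"
  have cpos: "c > 0" using u0 by (simp add: c_def)
  have "continuous (at u0) (\<lambda>u. (G u)^2)" using c by (intro continuous_intros) (auto simp: continuous_on_eq_continuous_at)
  then obtain r where r: "r > 0" "\<And>u. dist u u0 < r \<Longrightarrow> dist ((G u)^2) ((G u0)^2) < c"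
    using cpos unfolding continuous_at_eps_delta by blast
  have low: "c * indicator (ball u0 r) u \<le> (G u)^2" for u
  proof (cases "u \<in> ball u0 r")
    case True
    then have "dist u u0 < r" by (simp add: dist_commute)
    then have "dist ((G u)^2) ((G u0)^2) < c" using r(2) by blast
    then have "(G u)^2 > (G u0)^2 - c" by (simp add: dist_real_def abs_less_iff)
    then show ?thesis using True by (simp add: c_def)
  qed simp
  have ii: "integrable lborel (\<lambda>u. c * indicator (ball u0 r) u)"
    using emeasure_lborel_ball_finite[of u0 r] by (intro integrable_mult_right integrable_real_indicator) auto
  have "(\<integral>u. c * indicator (ball u0 r) u \<partial>lborel) = c * measure lborel (ball u0 r)"
    by (simp add: integral_indicator)
  moreover have "measure lborel (ball u0 r) > 0" using r(1) content_ball_gt_0_iff by blast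
  moreover have "(\<integral>u. c * indicator (ball u0 r) u \<partial>lborel) \<le> (\<integral>u. (G u)^2 \<partial>lborel)"
    by (rule integral_mono[OF ii i]) (rule low)
  ultimately show ?thesis using cpos by (smt (verit) mult_pos_pos)
qed




lemma phi_eq:
  fixes K :: "real^'n::finite \<Rightarrow> real"
  assumes k: "k < CARD('n) * (CARD('n)+1) div 2"
  shows "vec_index (d2K K u) k = partial_deriv (coord (fst (vech_pairs CARD('n) ! k))) (partial_deriv (coord (snd (vech_pairs CARD('n) ! k))) K) u"
proof -
  obtain a b where ab: "vech_pairs CARD('n) ! k = (a,b)" by (cases "vech_pairs CARD('n) ! k")
  have L: "b \<le> a" "a < CARD('n)" using vp_in[OF k] ab by (auto simp: L_set_def)
  show ?thesis using k L ab by (simp add: d2K_def vech_mat_def to_jmat_def vp_len hessK_def)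
qed

lemma phi_cont:
  fixes K :: "real^'n::finite \<Rightarrow> real"
  assumes "Ck 4 K" and k: "k < CARD('n) * (CARD('n)+1) div 2"
  shows "continuous_on UNIV (\<lambda>u. vec_index (d2K K u) k)"
  unfolding phi_eq[OF k] by (rule hess_cont[OF assms(1)])

lemma phi_zero:
  fixes K :: "real^'n::finite \<Rightarrow> real"
  assumes "\<forall>u. 1 < norm u \<longrightarrow> K u = 0" and k: "k < CARD('n) * (CARD('n)+1) div 2" and u: "1 < norm u"
  shows "vec_index (d2K K u) k = 0"
  unfolding phi_eq[OF k] by (rule hess_zero[OF assms(1) u])

lemma R_carrier: "R_mat (K :: real^'n::finite \<Rightarrow> real) \<in> carrier_mat (CARD('n) * (CARD('n)+1) div 2) (CARD('n) * (CARD('n)+1) div 2)"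
  by (simp add: R_mat_def)

lemma R_entry: "k < CARD('n::finite) * (CARD('n)+1) div 2 \<Longrightarrow> l < CARD('n) * (CARD('n)+1) div 2 \<Longrightarrow>
  R_mat (K :: real^'n \<Rightarrow> real) $$ (k,l) = (\<integral>u. vec_index (d2K K u) k * vec_index (d2K K u) l \<partial>lborel)"
  by (simp add: R_mat_def)

lemma R_sym: "transpose_mat (R_mat (K :: real^'n::finite \<Rightarrow> real)) = R_mat K"
  by (rule eq_matI) (auto simp: R_mat_def mult.commute)

lemma R_qf:
  fixes K :: "real^'n::finite \<Rightarrow> real"
  assumes C: "Ck 4 K" and Z: "\<forall>u. 1 < norm u \<longrightarrow> K u = 0"
  and a: "a \<in> carrier_vec (CARD('n) * (CARD('n)+1) div 2)"
  shows "scalar_prod a (R_mat K *\<^sub>v a) = (\<integral>u. (\<Sum>k<CARD('n) * (CARD('n)+1) div 2. vec_index a k * vec_index (d2K K u) k)^2 \<partial>lborel)"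
proof -
  let ?N = "CARD('n) * (CARD('n)+1) div 2"
  let ?p = "\<lambda>k u. vec_index (d2K K u) k"
  have intp: "integrable lborel (\<lambda>u. ?p i u * ?p j u)" if "i < ?N" "j < ?N" for i j
  proof (rule int_cs)
    show "continuous_on UNIV (\<lambda>u. ?p i u * ?p j u)"
      by (rule continuous_on_mult[OF phi_cont[OF C that(1)] phi_cont[OF C that(2)]])
    show "\<forall>u. 1 < norm u \<longrightarrow> ?p i u * ?p j u = 0" using phi_zero[OF Z that(1)] by simp
  qed
  have "scalar_prod a (R_mat K *\<^sub>v a) = (\<Sum>i<?N. \<Sum>j<?N. vec_index a i * R_mat K $$ (i,j) * vec_index a j)"
    by (rule qf_sum[OF R_carrier a])
  also have "\<dots> = (\<Sum>i<?N. \<Sum>j<?N. \<integral>u. vec_index a i * vec_index a j * (?p i u * ?p j u) \<partial>lborel)"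
    by (intro sum.cong refl) (simp add: R_entry)
  also have "\<dots> = (\<Sum>i<?N. \<integral>u. (\<Sum>j<?N. vec_index a i * vec_index a j * (?p i u * ?p j u)) \<partial>lborel)"
    by (intro sum.cong refl Bochner_Integration.integral_sum[symmetric] integrable_mult_right intp) auto
  also have "\<dots> = (\<integral>u. (\<Sum>i<?N. \<Sum>j<?N. vec_index a i * vec_index a j * (?p i u * ?p j u)) \<partial>lborel)"
    by (intro Bochner_Integration.integral_sum[symmetric] Bochner_Integration.integrable_sum integrable_mult_right intp) auto
  also have "\<dots> = (\<integral>u. (\<Sum>k<?N. vec_index a k * ?p k u)^2 \<partial>lborel)"
    by (intro Bochner_Integration.integral_cong refl) (simp add: power2_eq_square sum_product algebra_simps)
  finally show ?thesis .
qed

lemma R_pos: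
  fixes K :: "real^'n::finite \<Rightarrow> real"
  assumes C: "Ck 4 K" and Z: "\<forall>u. 1 < norm u \<longrightarrow> K u = 0"
    and K2: "\<forall>c \<rho>. 0 < \<rho> \<and> ball c \<rho> \<subseteq> cball 0 1 \<longrightarrow>
      (\<forall>a :: nat \<Rightarrow> real.
         (\<forall>u. (\<Sum>k < CARD('n) * (CARD('n) + 1) div 2.
                 a k * (indicator (ball c \<rho>) u * vec_index (d2K K u) k)) = 0)
         \<longrightarrow> (\<forall>k < CARD('n) * (CARD('n) + 1) div 2. a k = 0))"
  shows "0 < lam_min (R_mat K)"
proof -
  let ?N = "CARD('n) * (CARD('n)+1) div 2"
  have Npos: "0 < ?N" by (rule N_pos) simp
  have NT: "?N \<le> CARD('n \<times> 'n)"
  proof -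
    have c: "CARD('n \<times> 'n) = CARD('n) * CARD('n)"
      by (rule card_prod)
    have c1: "CARD('n) + 1 \<le> 2 * CARD('n)" using finite_UNIV_card_ge_0[where 'a='n] by simp
    have "CARD('n) * (CARD('n)+1) \<le> CARD('n) * (2 * CARD('n))" by (rule mult_le_mono2[OF c1])
    then have "CARD('n) * (CARD('n)+1) div 2 \<le> CARD('n) * (2 * CARD('n)) div 2" by (rule div_le_mono)
    also have "CARD('n) * (2 * CARD('n)) div 2 = CARD('n) * CARD('n)" by simp
    finally show ?thesis unfolding c .
  qed
  have "eigenvalue (R_mat K) (lam_min (R_mat K))" using spectral[OF R_carrier R_sym Npos NT] by blast
  then obtain v where ev: "eigenvector (R_mat K) v (lam_min (R_mat K))" unfolding eigenvalue_def by blast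
  have dr: "dim_row (R_mat K) = ?N" by (simp add: R_mat_def)
  have v: "v \<in> carrier_vec ?N" "v \<noteq> 0\<^sub>v ?N" "R_mat K *\<^sub>v v = lam_min (R_mat K) \<cdot>\<^sub>v v"
    using ev unfolding eigenvector_def dr by blast+
  define G where "G = (\<lambda>u. \<Sum>k<?N. vec_index v k * vec_index (d2K K u) k)"
  have Gc: "continuous_on UNIV G" unfolding G_def
    by (intro continuous_on_sum continuous_on_mult continuous_on_const phi_cont[OF C]) auto
  have Gz: "\<forall>u. 1 < norm u \<longrightarrow> (G u)^2 = 0"
  proof (intro allI impI)
    fix u :: "real^'n" assume u: "1 < norm u"
    have "G u = 0" unfolding G_def by (rule sum.neutral) (simp add: phi_zero[OF Z _ u])
    then show "(G u)^2 = 0" by simp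
  qed
  have Gi: "integrable lborel (\<lambda>u. (G u)^2)" by (rule int_cs[OF _ Gz]) (intro continuous_on_power Gc)
  obtain u0 where u0: "G u0 \<noteq> 0"
  proof (rule ccontr)
    assume "\<not> thesis"
    then have G0: "\<forall>u. G u = 0" using that by blast
    have "\<forall>k < ?N. vec_index v k = 0"
    proof -
      have sub: "ball (0::real^'n) 1 \<subseteq> cball 0 1" by auto
      have "\<forall>u. (\<Sum>k < ?N. vec_index v k * (indicator (ball 0 1) u * vec_index (d2K K u) k)) = 0"
      proof
        fix u :: "real^'n"
        have "(\<Sum>k < ?N. vec_index v k * (indicator (ball 0 1) u * vec_index (d2K K u) k)) = indicator (ball 0 1) u * G u"
          by (simp add: G_def sum_distrib_left algebra_simps)
        then show "(\<Sum>k < ?N. vec_index v k * (indicator (ball 0 1) u * vec_index (d2K K u) k)) = 0" using G0 by simp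
      qed
      moreover have K2': "0 < (1::real) \<and> ball (0::real^'n) 1 \<subseteq> cball 0 1 \<longrightarrow>
        (\<forall>a :: nat \<Rightarrow> real. (\<forall>u. (\<Sum>k < ?N. a k * (indicator (ball 0 1) u * vec_index (d2K K u) k)) = 0)
         \<longrightarrow> (\<forall>k < ?N. a k = 0))"
        using K2 by blast
      ultimately show ?thesis using sub by auto
    qed
    then have "v = 0\<^sub>v ?N" using v(1) by (intro eq_vecI) auto
    with v(2) show False by simp
  qed
  have "0 < (\<integral>u. (G u)^2 \<partial>lborel)" by (rule int_pos[OF Gc Gi u0])
  also have "\<dots> = scalar_prod v (R_mat K *\<^sub>v v)" unfolding G_def by (rule R_qf[OF C Z v(1), symmetric])
  also have "\<dots> = lam_min (R_mat K) * scalar_prod v v" using v(1,3) by simp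
  finally show ?thesis using sq_pos[OF v(1,2)] by (simp add: zero_less_mult_iff)
qed




lemma quad4:
  fixes f g :: "'l \<Rightarrow> 'a \<Rightarrow> 'b \<Rightarrow> real"
  assumes "finite A" "finite B" "finite L"
  shows "(\<Sum>\<alpha>\<in>A. \<Sum>\<beta>\<in>B. (\<Sum>l\<in>L. f l \<alpha> \<beta>) * (\<Sum>l'\<in>L. g l' \<alpha> \<beta>)) =
         (\<Sum>l\<in>L. \<Sum>l'\<in>L. \<Sum>\<alpha>\<in>A. \<Sum>\<beta>\<in>B. f l \<alpha> \<beta> * g l' \<alpha> \<beta>)"
proof -
  have "(\<Sum>\<alpha>\<in>A. \<Sum>\<beta>\<in>B. (\<Sum>l\<in>L. f l \<alpha> \<beta>) * (\<Sum>l'\<in>L. g l' \<alpha> \<beta>)) =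
        (\<Sum>\<alpha>\<in>A. \<Sum>\<beta>\<in>B. \<Sum>l\<in>L. \<Sum>l'\<in>L. f l \<alpha> \<beta> * g l' \<alpha> \<beta>)"
    by (simp add: sum_product)
  also have "\<dots> = (\<Sum>\<alpha>\<in>A. \<Sum>l\<in>L. \<Sum>\<beta>\<in>B. \<Sum>l'\<in>L. f l \<alpha> \<beta> * g l' \<alpha> \<beta>)"
    by (rule sum.cong[OF refl], rule sum.swap)
  also have "\<dots> = (\<Sum>\<alpha>\<in>A. \<Sum>l\<in>L. \<Sum>l'\<in>L. \<Sum>\<beta>\<in>B. f l \<alpha> \<beta> * g l' \<alpha> \<beta>)"
    by (rule sum.cong[OF refl], rule sum.cong[OF refl], rule sum.swap)
  also have "\<dots> = (\<Sum>l\<in>L. \<Sum>\<alpha>\<in>A. \<Sum>l'\<in>L. \<Sum>\<beta>\<in>B. f l \<alpha> \<beta> * g l' \<alpha> \<beta>)"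
    by (rule sum.swap)
  also have "\<dots> = (\<Sum>l\<in>L. \<Sum>l'\<in>L. \<Sum>\<alpha>\<in>A. \<Sum>\<beta>\<in>B. f l \<alpha> \<beta> * g l' \<alpha> \<beta>)"
    by (rule sum.cong[OF refl], rule sum.swap)
  finally show ?thesis .
qed

lemma inner_sum_vec: "inner (x :: real^'n::finite) y = (\<Sum>\<alpha>\<in>UNIV. vec_nth x \<alpha> * vec_nth y \<alpha>)"
  by (simp add: inner_vec_def)

lemma swap_if3:
  fixes y :: "nat \<Rightarrow> real"
  shows "(\<Sum>l\<in>L. y l * (\<Sum>a\<in>A. \<Sum>b\<in>B. if P a b then f l a b else 0)) =
     (\<Sum>a\<in>A. \<Sum>b\<in>B. if P a b then (\<Sum>l\<in>L. y l * f l a b) else 0)"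
proof -
  have "(\<Sum>l\<in>L. y l * (\<Sum>a\<in>A. \<Sum>b\<in>B. if P a b then f l a b else 0)) =
     (\<Sum>l\<in>L. \<Sum>a\<in>A. \<Sum>b\<in>B. if P a b then y l * f l a b else 0)"
    by (intro sum.cong refl) (auto simp: sum_distrib_left intro!: sum.cong)
  also have "\<dots> = (\<Sum>a\<in>A. \<Sum>l\<in>L. \<Sum>b\<in>B. if P a b then y l * f l a b else 0)" by (rule sum.swap)
  also have "\<dots> = (\<Sum>a\<in>A. \<Sum>b\<in>B. \<Sum>l\<in>L. if P a b then y l * f l a b else 0)"
    by (rule sum.cong[OF refl], rule sum.swap)
  also have "\<dots> = (\<Sum>a\<in>A. \<Sum>b\<in>B. if P a b then (\<Sum>l\<in>L. y l * f l a b) else 0)"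
    by (intro sum.cong refl) auto
  finally show ?thesis .
qed

lemma coord_bij: "bij_betw (coord :: nat \<Rightarrow> 'n::finite) {..<CARD('n)} UNIV"
proof -
  have "\<exists>e. bij_betw e {..<CARD('n)} (UNIV :: 'n set)"
    using ex_bij_betw_nat_finite[of "UNIV :: 'n set"] by (simp add: lessThan_atLeast0)
  then show ?thesis unfolding coord_def by (rule someI_ex)
qed

lemma sum_coord: "(\<Sum>a<CARD('n::finite). f (coord a :: 'n)) = (\<Sum>\<alpha>\<in>UNIV. f \<alpha>)"
  using sum.reindex_bij_betw[OF coord_bij, of f] by simp

lemma DtK:
  fixes x y :: "real^'n::finite"
  assumes p: "p < CARD('n) * (CARD('n)+1) div 2"
  shows "vec_index (transpose_mat (dup_mat CARD('n)) *\<^sub>v kron_vec (to_jvec x) (to_jvec y)) p =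
    (\<Sum>a<CARD('n). \<Sum>b<CARD('n). if srt a b = vech_pairs CARD('n) ! p then vec_nth x (coord b) * vec_nth y (coord a) else 0)"
proof -
  let ?d = "CARD('n)"
  let ?N = "?d * (?d+1) div 2"
  have Dt: "transpose_mat (Dm ?d) \<in> carrier_mat ?N (?d * ?d)" using Dm_carrier by simp
  have kc: "kron_vec (to_jvec x) (to_jvec y) \<in> carrier_vec (?d * ?d)" by (simp add: kron_vec_def to_jvec_def)
  have "vec_index (transpose_mat (Dm ?d) *\<^sub>v kron_vec (to_jvec x) (to_jvec y)) p =
     (\<Sum>k<?d * ?d. transpose_mat (Dm ?d) $$ (p,k) * vec_index (kron_vec (to_jvec x) (to_jvec y)) k)"
    by (rule mv_entry[OF Dt kc p])
  also have "\<dots> = (\<Sum>k<?d * ?d. (\<lambda>a b. if srt a b = vech_pairs ?d ! p then vec_nth x (coord b) * vec_nth y (coord a) else 0) (k mod ?d) (k div ?d))"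
  proof (rule sum.cong[OF refl])
    fix k assume "k \<in> {..<?d * ?d}"
    then have k: "k < ?d * ?d" by simp
    then have km: "k mod ?d < ?d" "k div ?d < ?d" using kmod by blast+
    have "transpose_mat (Dm ?d) $$ (p,k) = Dm ?d $$ (k,p)" using k p by (simp add: Dm_def)
    also have "\<dots> = (if srt (k mod ?d) (k div ?d) = vech_pairs ?d ! p then 1 else 0)" by (rule Dm_entry[OF k p])
    finally show "transpose_mat (Dm ?d) $$ (p,k) * vec_index (kron_vec (to_jvec x) (to_jvec y)) k =
      (\<lambda>a b. if srt a b = vech_pairs ?d ! p then vec_nth x (coord b) * vec_nth y (coord a) else 0) (k mod ?d) (k div ?d)"
      using k km by (simp add: kron_vec_def to_jvec_def)
  qed
  also have "\<dots> = (\<Sum>a<?d. \<Sum>b<?d. if srt a b = vech_pairs ?d ! p then vec_nth x (coord b) * vec_nth y (coord a) else 0)"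
    by (rule sum_sq)
  finally show ?thesis by (simp add: dup_mat_eq)
qed


definition wv :: "nat \<Rightarrow> (nat \<Rightarrow> real) \<Rightarrow> (nat \<Rightarrow> real^'n::finite) \<Rightarrow> real^'n \<Rightarrow> nat \<Rightarrow> real^'n" where
  "wv r lam v gx i = (\<Sum>j\<in>{1..r}. ((v j \<bullet> gx) / (lam i - lam j)) *\<^sub>R v j)"

definition BBf :: "nat \<Rightarrow> (nat \<Rightarrow> real) \<Rightarrow> (nat \<Rightarrow> real^'n::finite) \<Rightarrow> real^'n \<Rightarrow> real Matrix.vec \<Rightarrow> 'n \<Rightarrow> 'n \<Rightarrow> real" where
  "BBf r lam v gx y \<alpha> \<beta> = (\<Sum>l<CARD('n) - r. vec_index y l * (vec_nth (v (r+1+l)) \<beta> * vec_nth (wv r lam v gx (r+1+l)) \<alpha>))"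

lemma M_carrier: "M_mat r lam v (gx :: real^'n::finite) \<in> carrier_mat (CARD('n) * (CARD('n)+1) div 2) (CARD('n) - r)"
  by (simp add: M_mat_def)

lemma M_entry:
  fixes v :: "nat \<Rightarrow> real^'n::finite"
  assumes p: "p < CARD('n) * (CARD('n)+1) div 2" and y: "y \<in> carrier_vec (CARD('n) - r)"
  shows "vec_index (M_mat r lam v gx *\<^sub>v y) p =
    (\<Sum>a<CARD('n). \<Sum>b<CARD('n). if srt a b = vech_pairs CARD('n) ! p then BBf r lam v gx y (coord a) (coord b) else 0)"
proof -
  let ?d = "CARD('n)"
  have "vec_index (M_mat r lam v gx *\<^sub>v y) p = (\<Sum>l<?d - r. M_mat r lam v gx $$ (p,l) * vec_index y l)"
    by (rule mv_entry[OF M_carrier y p])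
  also have "\<dots> = (\<Sum>l<?d - r. vec_index y l * (\<Sum>a<?d. \<Sum>b<?d. if srt a b = vech_pairs ?d ! p then
        vec_nth (v (r+1+l)) (coord b) * vec_nth (wv r lam v gx (r+1+l)) (coord a) else 0))"
  proof (rule sum.cong[OF refl])
    fix l assume "l \<in> {..<?d - r}"
    then have "M_mat r lam v gx $$ (p,l) = vec_index (m_vec r lam v gx (r+1+l)) p" using p by (simp add: M_mat_def)
    also have "\<dots> = (\<Sum>a<?d. \<Sum>b<?d. if srt a b = vech_pairs ?d ! p then
        vec_nth (v (r+1+l)) (coord b) * vec_nth (wv r lam v gx (r+1+l)) (coord a) else 0)"
      unfolding m_vec_def wv_def[symmetric] by (rule DtK[OF p])
    finally show "M_mat r lam v gx $$ (p,l) * vec_index y l = vec_index y l * (\<Sum>a<?d. \<Sum>b<?d. if srt a b = vech_pairs ?d ! p then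
        vec_nth (v (r+1+l)) (coord b) * vec_nth (wv r lam v gx (r+1+l)) (coord a) else 0)" by simp
  qed
  also have "\<dots> = (\<Sum>a<?d. \<Sum>b<?d. if srt a b = vech_pairs ?d ! p then
        (\<Sum>l<?d - r. vec_index y l * (vec_nth (v (r+1+l)) (coord b) * vec_nth (wv r lam v gx (r+1+l)) (coord a))) else 0)"
    by (rule swap_if3)
  finally show ?thesis unfolding BBf_def .
qed

lemma pt_ineq:
  fixes G :: "nat \<Rightarrow> nat \<Rightarrow> real"
  assumes L: "j \<le> i" "i < d"
  shows "(\<Sum>a<d. \<Sum>b<d. if srt a b = (i,j) then ((G a b + G b a)/2)^2 else 0) \<le>
         (\<Sum>a<d. \<Sum>b<d. if srt a b = (i,j) then G a b else 0)^2"
proof -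
  have l: "(\<Sum>a<d. \<Sum>b<d. if srt a b = (i,j) then ((G a b + G b a)/2)^2 else 0) =
     (if i = j then ((G i i + G i i)/2)^2 else ((G i j + G j i)/2)^2 + ((G j i + G i j)/2)^2)"
    by (rule pair_sum[OF L])
  have r: "(\<Sum>a<d. \<Sum>b<d. if srt a b = (i,j) then G a b else 0) = (if i = j then G i i else G i j + G j i)"
    by (rule pair_sum[OF L])
  show ?thesis
  proof (cases "i = j")
    case True then show ?thesis using l r by simp
  next
    case False
    have "((G i j + G j i)/2)^2 + ((G j i + G i j)/2)^2 = (G i j + G j i)^2 / 2"
      by (simp add: power2_eq_square field_simps)
    also have "\<dots> \<le> (G i j + G j i)^2" by simp
    finally show ?thesis using False l r by simp
  qed
qed

lemma My_ge:
  fixes v :: "nat \<Rightarrow> real^'n::finite"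
  assumes y: "y \<in> carrier_vec (CARD('n) - r)"
  shows "(\<Sum>a<CARD('n). \<Sum>b<CARD('n). ((BBf r lam v gx y (coord a) (coord b) + BBf r lam v gx y (coord b) (coord a))/2)^2)
     \<le> scalar_prod (M_mat r lam v gx *\<^sub>v y) (M_mat r lam v gx *\<^sub>v y)"
proof -
  let ?d = "CARD('n)"
  let ?N = "?d * (?d+1) div 2"
  let ?G = "\<lambda>a b. BBf r lam v gx y (coord a) (coord b)"
  let ?T = "\<lambda>a b. ((?G a b + ?G b a)/2)^2"
  have My: "M_mat r lam v gx *\<^sub>v y \<in> carrier_vec ?N" by (rule mult_mat_vec_carrier[OF M_carrier y])
  have "(\<Sum>a<?d. \<Sum>b<?d. ?T a b) = (\<Sum>a<?d. \<Sum>b<?d. \<Sum>p<?N. if srt a b = vech_pairs ?d ! p then (\<lambda>_. ?T a b) (vech_pairs ?d ! p) else 0)"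
    by (intro sum.cong refl sum_delta_vp[symmetric]) auto
  also have "\<dots> = (\<Sum>p<?N. \<Sum>a<?d. \<Sum>b<?d. if srt a b = vech_pairs ?d ! p then ?T a b else 0)"
  proof -
    have "(\<Sum>a<?d. \<Sum>b<?d. \<Sum>p<?N. if srt a b = vech_pairs ?d ! p then ?T a b else 0) =
          (\<Sum>a<?d. \<Sum>p<?N. \<Sum>b<?d. if srt a b = vech_pairs ?d ! p then ?T a b else 0)"
      by (rule sum.cong[OF refl], rule sum.swap)
    also have "\<dots> = (\<Sum>p<?N. \<Sum>a<?d. \<Sum>b<?d. if srt a b = vech_pairs ?d ! p then ?T a b else 0)"
      by (rule sum.swap)
    finally show ?thesis by simp
  qed
  also have "\<dots> \<le> (\<Sum>p<?N. (vec_index (M_mat r lam v gx *\<^sub>v y) p)^2)"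
  proof (rule sum_mono)
    fix p assume "p \<in> {..<?N}"
    then have p: "p < ?N" by simp
    obtain i j where ij: "vech_pairs ?d ! p = (i,j)" by (cases "vech_pairs ?d ! p")
    have L: "j \<le> i" "i < ?d" using vp_in[OF p] ij by (auto simp: L_set_def)
    show "(\<Sum>a<?d. \<Sum>b<?d. if srt a b = vech_pairs ?d ! p then ?T a b else 0) \<le> (vec_index (M_mat r lam v gx *\<^sub>v y) p)^2"
      unfolding M_entry[OF p y] ij by (rule pt_ineq[OF L])
  qed
  also have "\<dots> = scalar_prod (M_mat r lam v gx *\<^sub>v y) (M_mat r lam v gx *\<^sub>v y)"
    by (rule sq_sum[OF My, symmetric])
  finally show ?thesis .
qed

lemma sum_sep: fixes P Q :: "'a \<Rightarrow> real"
  shows "(\<Sum>\<alpha>\<in>A. \<Sum>\<beta>\<in>B. c * (P \<alpha> * Q \<beta>)) = c * ((\<Sum>\<alpha>\<in>A. P \<alpha>) * (\<Sum>\<beta>\<in>B. Q \<beta>))"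
proof -
  have "(\<Sum>\<alpha>\<in>A. \<Sum>\<beta>\<in>B. c * (P \<alpha> * Q \<beta>)) = c * (\<Sum>\<alpha>\<in>A. \<Sum>\<beta>\<in>B. P \<alpha> * Q \<beta>)"
    by (simp add: sum_distrib_left)
  also have "\<dots> = c * ((\<Sum>\<alpha>\<in>A. P \<alpha>) * (\<Sum>\<beta>\<in>B. Q \<beta>))" by (simp only: sum_product)
  finally show ?thesis .
qed

lemma V_orth:
  fixes v :: "nat \<Rightarrow> real^'n::finite"
  assumes orth: "\<forall>i\<in>{1..CARD('n)}. \<forall>j\<in>{1..CARD('n)}. v i \<bullet> v j = (if i = j then 1 else 0)"
    and r: "r \<le> CARD('n) - 1" and l: "l < CARD('n) - r" and l': "l' < CARD('n) - r"
  shows "v (r+1+l) \<bullet> v (r+1+l') = (if l = l' then 1 else 0)"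
    and "v (r+1+l) \<bullet> wv r lam v gx (r+1+l') = 0"
proof -
  have i1: "r+1+l \<in> {1..CARD('n)}" "r+1+l' \<in> {1..CARD('n)}" using l l' by auto
  show "v (r+1+l) \<bullet> v (r+1+l') = (if l = l' then 1 else 0)" using orth i1 by auto
  have "v (r+1+l) \<bullet> v j = 0" if "j \<in> {1..r}" for j
  proof -
    have "j \<in> {1..CARD('n)}" using that r by auto
    moreover have "j \<noteq> r+1+l" using that by auto
    ultimately show ?thesis using orth i1 by auto
  qed
  then show "v (r+1+l) \<bullet> wv r lam v gx (r+1+l') = 0"
    by (simp add: wv_def inner_sum_right)
qed

lemma T_sum:
  fixes v :: "nat \<Rightarrow> real^'n::finite"
  assumes orth: "\<forall>i\<in>{1..CARD('n)}. \<forall>j\<in>{1..CARD('n)}. v i \<bullet> v j = (if i = j then 1 else 0)"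
    and r: "r \<le> CARD('n) - 1"
  shows "(\<Sum>a<CARD('n). \<Sum>b<CARD('n). ((BBf r lam v gx y (coord a) (coord b) + BBf r lam v gx y (coord b) (coord a))/2)^2)
    = (1/2) * (\<Sum>l<CARD('n) - r. (vec_index y l)^2 * (wv r lam v gx (r+1+l) \<bullet> wv r lam v gx (r+1+l)))"
proof -
  let ?d = "CARD('n)"
  let ?L = "{..<?d - r}"
  let ?B = "BBf r lam v gx y"
  let ?V = "\<lambda>l. v (r+1+l)"
  let ?W = "\<lambda>l. wv r lam v gx (r+1+l)"
  let ?y = "vec_index y"
  have "(\<Sum>a<?d. \<Sum>b<?d. ((?B (coord a) (coord b) + ?B (coord b) (coord a))/2)^2)
      = (\<Sum>a<?d. \<Sum>\<beta>\<in>UNIV. ((?B (coord a) \<beta> + ?B \<beta> (coord a))/2)^2)"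
    by (intro sum.cong refl) (rule sum_coord)
  also have "\<dots> = (\<Sum>\<alpha>\<in>UNIV. \<Sum>\<beta>\<in>UNIV. ((?B \<alpha> \<beta> + ?B \<beta> \<alpha>)/2)^2)"
    by (rule sum_coord)
  also have "\<dots> = (\<Sum>\<alpha>\<in>UNIV. \<Sum>\<beta>\<in>UNIV. (?B \<alpha> \<beta> * ?B \<alpha> \<beta>)/4 + (2 * (?B \<alpha> \<beta> * ?B \<beta> \<alpha>))/4 + (?B \<beta> \<alpha> * ?B \<beta> \<alpha>)/4)"
    by (intro sum.cong refl) (simp add: power2_eq_square field_simps)
  also have "\<dots> = (\<Sum>\<alpha>\<in>UNIV. \<Sum>\<beta>\<in>UNIV. ?B \<alpha> \<beta> * ?B \<alpha> \<beta>)/4 + (2 * (\<Sum>\<alpha>\<in>UNIV. \<Sum>\<beta>\<in>UNIV. ?B \<alpha> \<beta> * ?B \<beta> \<alpha>))/4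
       + (\<Sum>\<alpha>\<in>UNIV. \<Sum>\<beta>\<in>UNIV. ?B \<beta> \<alpha> * ?B \<beta> \<alpha>)/4"
    by (simp only: sum.distrib sum_divide_distrib sum_distrib_left)
  also have "(\<Sum>\<alpha>\<in>UNIV. \<Sum>\<beta>\<in>UNIV. ?B \<beta> \<alpha> * ?B \<beta> \<alpha>) = (\<Sum>\<alpha>\<in>UNIV. \<Sum>\<beta>\<in>UNIV. ?B \<alpha> \<beta> * ?B \<alpha> \<beta>)"
    by (rule sum.swap)
  also have S1: "(\<Sum>\<alpha>\<in>UNIV. \<Sum>\<beta>\<in>UNIV. ?B \<alpha> \<beta> * ?B \<alpha> \<beta>) = (\<Sum>l\<in>?L. (?y l)^2 * (?W l \<bullet> ?W l))"
  proof -
    have "(\<Sum>\<alpha>\<in>UNIV. \<Sum>\<beta>\<in>UNIV. ?B \<alpha> \<beta> * ?B \<alpha> \<beta>) =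
      (\<Sum>l\<in>?L. \<Sum>l'\<in>?L. \<Sum>\<alpha>\<in>UNIV. \<Sum>\<beta>\<in>UNIV. (?y l * (vec_nth (?V l) \<beta> * vec_nth (?W l) \<alpha>)) * (?y l' * (vec_nth (?V l') \<beta> * vec_nth (?W l') \<alpha>)))"
      unfolding BBf_def by (rule quad4) auto
    also have "\<dots> = (\<Sum>l\<in>?L. \<Sum>l'\<in>?L. (?y l * ?y l') * ((?W l \<bullet> ?W l') * (?V l \<bullet> ?V l')))"
    proof (intro sum.cong refl)
      fix l l'
      have "(\<Sum>\<alpha>\<in>UNIV. \<Sum>\<beta>\<in>UNIV. (?y l * (vec_nth (?V l) \<beta> * vec_nth (?W l) \<alpha>)) * (?y l' * (vec_nth (?V l') \<beta> * vec_nth (?W l') \<alpha>)))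
        = (\<Sum>\<alpha>\<in>UNIV. \<Sum>\<beta>\<in>UNIV. (?y l * ?y l') * ((vec_nth (?W l) \<alpha> * vec_nth (?W l') \<alpha>) * (vec_nth (?V l) \<beta> * vec_nth (?V l') \<beta>)))"
        by (intro sum.cong refl) (simp add: mult_ac)
      also have "\<dots> = (?y l * ?y l') * ((?W l \<bullet> ?W l') * (?V l \<bullet> ?V l'))"
        by (simp only: sum_sep inner_sum_vec)
      finally show "(\<Sum>\<alpha>\<in>UNIV. \<Sum>\<beta>\<in>UNIV. (?y l * (vec_nth (?V l) \<beta> * vec_nth (?W l) \<alpha>)) * (?y l' * (vec_nth (?V l') \<beta> * vec_nth (?W l') \<alpha>)))
        = (?y l * ?y l') * ((?W l \<bullet> ?W l') * (?V l \<bullet> ?V l'))" .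
    qed
    also have "\<dots> = (\<Sum>l\<in>?L. \<Sum>l'\<in>?L. if l' = l then (?y l)^2 * (?W l \<bullet> ?W l) else 0)"
    proof (intro sum.cong refl)
      fix l l' assume "l \<in> ?L" "l' \<in> ?L"
      then show "?y l * ?y l' * ((?W l \<bullet> ?W l') * (?V l \<bullet> ?V l')) = (if l' = l then (?y l)^2 * (?W l \<bullet> ?W l) else 0)"
        using V_orth(1)[OF orth r, of l l'] by (auto simp: power2_eq_square)
    qed
    also have "\<dots> = (\<Sum>l\<in>?L. (?y l)^2 * (?W l \<bullet> ?W l))" by simp
    finally show ?thesis .
  qed
  also have S2: "(\<Sum>\<alpha>\<in>UNIV. \<Sum>\<beta>\<in>UNIV. ?B \<alpha> \<beta> * ?B \<beta> \<alpha>) = 0"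
  proof -
    have "(\<Sum>\<alpha>\<in>UNIV. \<Sum>\<beta>\<in>UNIV. ?B \<alpha> \<beta> * ?B \<beta> \<alpha>) =
      (\<Sum>l\<in>?L. \<Sum>l'\<in>?L. \<Sum>\<alpha>\<in>UNIV. \<Sum>\<beta>\<in>UNIV. (?y l * (vec_nth (?V l) \<beta> * vec_nth (?W l) \<alpha>)) * (?y l' * (vec_nth (?V l') \<alpha> * vec_nth (?W l') \<beta>)))"
      unfolding BBf_def by (rule quad4) auto
    also have "\<dots> = (\<Sum>l\<in>?L. \<Sum>l'\<in>?L. (?y l * ?y l') * ((?W l \<bullet> ?V l') * (?V l \<bullet> ?W l')))"
    proof (intro sum.cong refl)
      fix l l'
      have "(\<Sum>\<alpha>\<in>UNIV. \<Sum>\<beta>\<in>UNIV. (?y l * (vec_nth (?V l) \<beta> * vec_nth (?W l) \<alpha>)) * (?y l' * (vec_nth (?V l') \<alpha> * vec_nth (?W l') \<beta>)))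
        = (\<Sum>\<alpha>\<in>UNIV. \<Sum>\<beta>\<in>UNIV. (?y l * ?y l') * ((vec_nth (?W l) \<alpha> * vec_nth (?V l') \<alpha>) * (vec_nth (?V l) \<beta> * vec_nth (?W l') \<beta>)))"
        by (intro sum.cong refl) (simp add: mult_ac)
      also have "\<dots> = (?y l * ?y l') * ((?W l \<bullet> ?V l') * (?V l \<bullet> ?W l'))"
        by (simp only: sum_sep inner_sum_vec)
      finally show "(\<Sum>\<alpha>\<in>UNIV. \<Sum>\<beta>\<in>UNIV. (?y l * (vec_nth (?V l) \<beta> * vec_nth (?W l) \<alpha>)) * (?y l' * (vec_nth (?V l') \<alpha> * vec_nth (?W l') \<beta>)))
        = (?y l * ?y l') * ((?W l \<bullet> ?V l') * (?V l \<bullet> ?W l'))" .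
    qed
    also have "\<dots> = 0"
    proof (intro sum.neutral ballI)
      fix l l' assume "l \<in> ?L" "l' \<in> ?L"
      then show "?y l * ?y l' * ((?W l \<bullet> ?V l') * (?V l \<bullet> ?W l')) = 0"
        using V_orth(2)[OF orth r, of l l' lam gx] by simp
    qed
    finally show ?thesis .
  qed
  finally show ?thesis by simp
qed

lemma W_norm:
  fixes v :: "nat \<Rightarrow> real^'n::finite"
  assumes orth: "\<forall>i\<in>{1..CARD('n)}. \<forall>j\<in>{1..CARD('n)}. v i \<bullet> v j = (if i = j then 1 else 0)"
    and r: "r \<le> CARD('n) - 1"
  shows "wv r lam v gx i \<bullet> wv r lam v gx i = (\<Sum>j\<in>{1..r}. ((v j \<bullet> gx) / (lam i - lam j))^2)"
proof -
  let ?c = "\<lambda>j. (v j \<bullet> gx) / (lam i - lam j)"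
  have "wv r lam v gx i \<bullet> wv r lam v gx i = (\<Sum>j\<in>{1..r}. \<Sum>k\<in>{1..r}. ?c j * ?c k * (v k \<bullet> v j))"
    by (simp add: wv_def inner_sum_left inner_sum_right sum_distrib_left mult.assoc)
  also have "\<dots> = (\<Sum>j\<in>{1..r}. \<Sum>k\<in>{1..r}. if k = j then (?c j)^2 else 0)"
  proof (intro sum.cong refl)
    fix j k assume "j \<in> {1..r}" "k \<in> {1..r}"
    then have "j \<in> {1..CARD('n)}" "k \<in> {1..CARD('n)}" using r by auto
    then show "?c j * ?c k * (v k \<bullet> v j) = (if k = j then (?c j)^2 else 0)"
      using orth by (auto simp: power2_eq_square)
  qed
  also have "\<dots> = (\<Sum>j\<in>{1..r}. (?c j)^2)" by simp
  finally show ?thesis .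
qed

lemma Sigma_bound:
  fixes v :: "nat \<Rightarrow> real^'n::finite" and K :: "real^'n \<Rightarrow> real"
  assumes orth: "\<forall>i\<in>{1..CARD('n)}. \<forall>j\<in>{1..CARD('n)}. v i \<bullet> v j = (if i = j then 1 else 0)"
    and r: "1 \<le> r" "r \<le> CARD('n) - 1"
    and lR: "0 \<le> lam_min (R_mat K)"
  shows "lam_min (R_mat K) * Min ((\<lambda>i. \<Sum>j\<in>{1..r}. ((v j \<bullet> gx) / (lam i - lam j))^2) ` {r+1..CARD('n)}) / 2
     \<le> lam_min (Sigma_mat K r lam v gx)"
proof -
  let ?d = "CARD('n)"
  let ?N = "?d * (?d+1) div 2"
  let ?n = "?d - r"
  let ?M = "M_mat r lam v gx"
  let ?R = "R_mat K"
  let ?Mt = "transpose_mat ?M"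
  let ?f = "\<lambda>i. \<Sum>j\<in>{1..r}. ((v j \<bullet> gx) / (lam i - lam j))^2"
  define mm where "mm = Min (?f ` {r+1..?d})"
  have M: "?M \<in> carrier_mat ?N ?n" by (rule M_carrier)
  have Mt: "?Mt \<in> carrier_mat ?n ?N" using M by simp
  have R: "?R \<in> carrier_mat ?N ?N" by (rule R_carrier)
  have npos: "0 < ?n" using r by simp
  have nT: "?n \<le> CARD('n)" by simp
  have Npos: "0 < ?N" by (rule N_pos) simp
  have NT: "?N \<le> CARD('n \<times> 'n)"
  proof -
    have c: "CARD('n \<times> 'n) = CARD('n) * CARD('n)" by (rule card_prod)
    have c1: "CARD('n) + 1 \<le> 2 * CARD('n)" using finite_UNIV_card_ge_0[where 'a='n] by simp
    have "CARD('n) * (CARD('n)+1) \<le> CARD('n) * (2 * CARD('n))" by (rule mult_le_mono2[OF c1])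
    then have "CARD('n) * (CARD('n)+1) div 2 \<le> CARD('n) * (2 * CARD('n)) div 2" by (rule div_le_mono)
    also have "CARD('n) * (2 * CARD('n)) div 2 = CARD('n) * CARD('n)" by simp
    finally show ?thesis unfolding c .
  qed
  have rayR: "\<forall>z\<in>carrier_vec ?N. lam_min ?R * scalar_prod z z \<le> scalar_prod z (?R *\<^sub>v z)"
    using spectral[OF R R_sym Npos NT] by blast
  have fin: "finite (?f ` {r+1..?d})" by simp
  have ne: "?f ` {r+1..?d} \<noteq> {}" using r by auto
  have mm0: "0 \<le> mm" unfolding mm_def using fin ne by (auto simp: Min_ge_iff intro!: sum_nonneg)
  have Sig: "Sigma_mat K r lam v gx = ?Mt * ?R * ?M" by (simp add: Sigma_mat_def)
  have Sc: "?Mt * ?R * ?M \<in> carrier_mat ?n ?n" using Mt R M by auto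
  have Ssym: "transpose_mat (?Mt * ?R * ?M) = ?Mt * ?R * ?M"
  proof -
    have MtR: "?Mt * ?R \<in> carrier_mat ?n ?N" using Mt R by auto
    have "transpose_mat (?Mt * ?R * ?M) = transpose_mat ?M * transpose_mat (?Mt * ?R)" by (rule transpose_mult[OF MtR M])
    also have "transpose_mat (?Mt * ?R) = transpose_mat ?R * transpose_mat ?Mt" by (rule transpose_mult[OF Mt R])
    also have "transpose_mat ?R = ?R" by (rule R_sym)
    also have "transpose_mat ?Mt = ?M" by simp
    also have "?Mt * (?R * ?M) = ?Mt * ?R * ?M" by (rule assoc_mult_mat[symmetric, OF Mt R M])
    finally show ?thesis .
  qed
  have key: "\<forall>y\<in>carrier_vec ?n. (lam_min ?R * mm / 2) * scalar_prod y y \<le> scalar_prod y ((?Mt * ?R * ?M) *\<^sub>v y)"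
  proof
    fix y :: "real Matrix.vec" assume y: "y \<in> carrier_vec ?n"
    have My: "?M *\<^sub>v y \<in> carrier_vec ?N" using M y by auto
    have RMy: "?R *\<^sub>v (?M *\<^sub>v y) \<in> carrier_vec ?N" using R My by auto
    have MtR: "?Mt * ?R \<in> carrier_mat ?n ?N" using Mt R by auto
    have "(?Mt * ?R * ?M) *\<^sub>v y = (?Mt * ?R) *\<^sub>v (?M *\<^sub>v y)" by (rule assoc_mult_mat_vec[OF MtR M y])
    also have "\<dots> = ?Mt *\<^sub>v (?R *\<^sub>v (?M *\<^sub>v y))" by (rule assoc_mult_mat_vec[OF Mt R My])
    finally have e1: "(?Mt * ?R * ?M) *\<^sub>v y = ?Mt *\<^sub>v (?R *\<^sub>v (?M *\<^sub>v y))" .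
    have "scalar_prod y ((?Mt * ?R * ?M) *\<^sub>v y) = scalar_prod (?Mt *\<^sub>v (?R *\<^sub>v (?M *\<^sub>v y))) y"
      unfolding e1 by (rule comm_scalar_prod[OF y]) (use Mt RMy in auto)
    also have "\<dots> = scalar_prod (?R *\<^sub>v (?M *\<^sub>v y)) (?M *\<^sub>v y)"
      by (rule transpose_vec_mult_scalar[OF M y RMy])
    also have "\<dots> = scalar_prod (?M *\<^sub>v y) (?R *\<^sub>v (?M *\<^sub>v y))" by (rule comm_scalar_prod[OF RMy My])
    finally have e2: "scalar_prod y ((?Mt * ?R * ?M) *\<^sub>v y) = scalar_prod (?M *\<^sub>v y) (?R *\<^sub>v (?M *\<^sub>v y))" .
    have b1: "(1/2) * mm * scalar_prod y y \<le> scalar_prod (?M *\<^sub>v y) (?M *\<^sub>v y)"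
    proof -
      have "(1/2) * mm * scalar_prod y y = (1/2) * (\<Sum>l<?n. (vec_index y l)^2 * mm)"
        by (simp add: sq_sum[OF y] sum_distrib_left sum_distrib_right mult_ac)
      also have "\<dots> \<le> (1/2) * (\<Sum>l<?n. (vec_index y l)^2 * (wv r lam v gx (r+1+l) \<bullet> wv r lam v gx (r+1+l)))"
      proof -
        have "(\<Sum>l<?n. (vec_index y l)^2 * mm) \<le> (\<Sum>l<?n. (vec_index y l)^2 * (wv r lam v gx (r+1+l) \<bullet> wv r lam v gx (r+1+l)))"
        proof (rule sum_mono)
          fix l assume "l \<in> {..<?n}"
          then have l: "r+1+l \<in> {r+1..?d}" by auto
          have "mm \<le> ?f (r+1+l)" unfolding mm_def using fin l by (intro Min_le) auto
          also have "?f (r+1+l) = wv r lam v gx (r+1+l) \<bullet> wv r lam v gx (r+1+l)"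
            by (rule W_norm[OF orth r(2), symmetric])
          finally show "(vec_index y l)^2 * mm \<le> (vec_index y l)^2 * (wv r lam v gx (r+1+l) \<bullet> wv r lam v gx (r+1+l))"
            by (intro mult_left_mono) auto
        qed
        then show ?thesis by simp
      qed
      also have "\<dots> = (\<Sum>a<CARD('n). \<Sum>b<CARD('n). ((BBf r lam v gx y (coord a) (coord b) + BBf r lam v gx y (coord b) (coord a))/2)^2)"
        by (rule T_sum[OF orth r(2), symmetric])
      also have "\<dots> \<le> scalar_prod (?M *\<^sub>v y) (?M *\<^sub>v y)" by (rule My_ge[OF y])
      finally show ?thesis .
    qed
    have "(lam_min ?R * mm / 2) * scalar_prod y y = lam_min ?R * ((1/2) * mm * scalar_prod y y)" by simp
    also have "\<dots> \<le> lam_min ?R * scalar_prod (?M *\<^sub>v y) (?M *\<^sub>v y)" by (rule mult_left_mono[OF b1 lR])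
    also have "\<dots> \<le> scalar_prod (?M *\<^sub>v y) (?R *\<^sub>v (?M *\<^sub>v y))" using rayR My by blast
    finally show "(lam_min ?R * mm / 2) * scalar_prod y y \<le> scalar_prod y ((?Mt * ?R * ?M) *\<^sub>v y)" using e2 by simp
  qed
  have "lam_min ?R * mm / 2 \<le> lam_min (?Mt * ?R * ?M)" by (rule lam_min_ge[OF Sc Ssym npos nT key])
  then show ?thesis unfolding Sig mm_def .
qed


theorem mainTheorem15:
  fixes f :: "real^'n::finite \<Rightarrow> real" and g :: "real^'n \<Rightarrow> real^'n"
    and H :: "real^'n \<Rightarrow> real^'n^'n" and K :: "real^'n \<Rightarrow> real"
    and r :: nat and x :: "real^'n" and lam :: "nat \<Rightarrow> real" and v :: "nat \<Rightarrow> real^'n"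
  assumes d: "CARD('n) \<ge> 2" and r: "1 \<le> r" "r \<le> CARD('n) - 1"
    and f_dens: "\<forall>y. 0 \<le> f y" "(f has_integral 1) UNIV"
    and f_grad: "\<forall>y. (f has_derivative (\<lambda>h. g y \<bullet> h)) (at y)"
    and f_hess: "\<forall>y. (g has_derivative (\<lambda>h. H y *v h)) (at y)"
    and eig: "\<forall>i\<in>{1..CARD('n)}. H x *v v i = lam i *\<^sub>R v i"
    and orth: "\<forall>i\<in>{1..CARD('n)}. \<forall>j\<in>{1..CARD('n)}. v i \<bullet> v j = (if i = j then 1 else 0)"
    and ord: "\<forall>i\<in>{1..CARD('n)}. \<forall>j\<in>{1..CARD('n)}. i \<le> j \<longrightarrow> lam j \<le> lam i"
    and K1: "\<forall>u. 0 \<le> K u" "(K has_integral 1) UNIV"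
      "\<forall>u w. norm u = norm w \<longrightarrow> K u = K w"
      "\<forall>u. 1 < norm u \<longrightarrow> K u = 0"
      "Ck 4 K"
    and K2: "\<forall>c \<rho>. 0 < \<rho> \<and> ball c \<rho> \<subseteq> cball 0 1 \<longrightarrow>
      (\<forall>a :: nat \<Rightarrow> real.
         (\<forall>u. (\<Sum>k < CARD('n) * (CARD('n) + 1) div 2.
                 a k * (indicator (ball c \<rho>) u * vec_index (d2K K u) k)) = 0)
         \<longrightarrow> (\<forall>k < CARD('n) * (CARD('n) + 1) div 2. a k = 0))"
    and gap: "\<forall>i\<in>{r+1..CARD('n)}. \<forall>j\<in>{1..r}. lam i \<noteq> lam j"
  shows "lam_min (Sigma_mat K r lam v (g x)) \<ge>
           lam_min (R_mat K)
             / (2 * lam_max (pinv (dup_mat CARD('n)) * transpose_mat (pinv (dup_mat CARD('n)))))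
             * Min ((\<lambda>i. \<Sum>j\<in>{1..r}. ((v j \<bullet> g x) / (lam i - lam j))\<^sup>2) ` {r+1..CARD('n)})
         \<and> 0 < lam_min (R_mat K)"
  proof -
  have lR: "0 < lam_min (R_mat K)" by (rule R_pos[OF K1(5) K1(4) K2])
  have SB: "lam_min (R_mat K) * Min ((\<lambda>i. \<Sum>j\<in>{1..r}. ((v j \<bullet> g x) / (lam i - lam j))^2) ` {r+1..CARD('n)}) / 2
     \<le> lam_min (Sigma_mat K r lam v (g x))"
    by (rule Sigma_bound[OF orth r less_imp_le[OF lR]])
  have P1: "1 \<le> lam_max (pinv (dup_mat CARD('n)) * transpose_mat (pinv (dup_mat CARD('n))))"
    by (rule lam_max_P) simp
  let ?mm = "Min ((\<lambda>i. \<Sum>j\<in>{1..r}. ((v j \<bullet> g x) / (lam i - lam j))^2) ` {r+1..CARD('n)})"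
  let ?P = "lam_max (pinv (dup_mat CARD('n)) * transpose_mat (pinv (dup_mat CARD('n))))"
  have ne: "(\<lambda>i. \<Sum>j\<in>{1..r}. ((v j \<bullet> g x) / (lam i - lam j))^2) ` {r+1..CARD('n)} \<noteq> {}" using r by auto
  have mm0: "0 \<le> ?mm" using ne by (auto simp: Min_ge_iff intro!: sum_nonneg)
  have "lam_min (R_mat K) / (2 * ?P) \<le> lam_min (R_mat K) / 2"
    using P1 lR by (intro divide_left_mono) auto
  then have "lam_min (R_mat K) / (2 * ?P) * ?mm \<le> lam_min (R_mat K) / 2 * ?mm"
    using mm0 by (rule mult_right_mono)
  also have "\<dots> = lam_min (R_mat K) * ?mm / 2" by simp
  also have "\<dots> \<le> lam_min (Sigma_mat K r lam v (g x))" by (rule SB)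
  finally show ?thesis using lR by simp
qed

end
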